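(* There exist universal positive constants $c$ and $c_6$ such that, in the setting of the context, whenever $n\ge c_6$: almost surely for every realization of $\widetilde{\mathbf C}$, with probability at least $1-\frac2n$ over the randomness in $(\mathbf z_t,\mathbf y_t)$, $$\widetilde{\mathbf y}_t^\top\widetilde{\mathbf C}\,\widetilde{\mathbf y}_t\le 2\Big(1+\frac1c\Big)\big(1+\mathsf{SU}_b(t)^2\big)\,\mathrm{tr}(\widetilde{\mathbf C})\,\ln n.$$
   Context: Setting: $d\ge n$, $\lambda_1,\dots,\lambda_d>0$; $\mathbf z_1,\dots,\mathbf z_d$ i.i.d. $\mathcal N(\mathbf0,\mathbf I_n)$; $\boldsymbol\Phi_{\mathsf{train}}=[\sqrt{\lambda_1}\mathbf z_1,\dots,\sqrt{\lambda_d}\mathbf z_d]$; $\mathbf A=\sum_j\lambda_j\mathbf z_j\mathbf z_j^\top$, $\mathbf A_{-t}=\sum_{j\ne t}\lambda_j\mathbf z_j\mathbf z_j^\top$ for a fixed index $t$. Labels $\mathbf y_t\in\{\pm1\}^n$ with $y_{t,i}=\mathrm{sgn}(z_{t,i})$ w.p. $1-\nu^*$ and $-\mathrm{sgn}(z_{t,i})$ w.p. $\nu^*$ independently ($0\le\nu^*<1/2$). $\widehat{\boldsymbol\alpha}_{2,\mathsf{binary}}=\boldsymbol\Phi_{\mathsf{train}}^\top\mathbf A^{-1}\mathbf y_t$ (minimum-norm interpolator of $\mathbf y_t$), $\mathsf{SU}_b(t)=\sqrt{\lambda_t}(\widehat{\boldsymbol\alpha}_{2,\mathsf{binary}})_t$,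 $\widetilde{\mathbf y}_t=\mathbf y_t-\mathsf{SU}_b(t)\mathbf z_t$, and $\widetilde{\mathbf C}=\mathbf A_{-t}^{-1}\big(\sum_{j\ne t}\lambda_j^2\mathbf z_j\mathbf z_j^\top\big)\mathbf A_{-t}^{-1}$ (independent of $(\mathbf z_t,\mathbf y_t)$). *)

theory Defs
  imports "HOL-Probability.Probability" "Jordan_Normal_Form.Gauss_Jordan_Elimination"
begin

text \<open>Vectors in R^n are represented by functions nat => real (entries 0..<n);
  the Gaussian vectors z_j are indexed by j < d.\<close>

definition std_normal_measure :: "real measure" where
  "std_normal_measure = density lborel std_normal_density"

definition gauss_vec :: "nat \<Rightarrow> (nat \<Rightarrow> real) measure" where
  "gauss_vec n = PiM {..<n} (\<lambda>_. std_normal_measure)"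

definition others_measure :: "nat \<Rightarrow> nat \<Rightarrow> nat \<Rightarrow> (nat \<Rightarrow> nat \<Rightarrow> real) measure" where
  "others_measure n d t = PiM ({..<d} - {t}) (\<lambda>_. gauss_vec n)"

definition flip_measure :: "nat \<Rightarrow> real \<Rightarrow> (nat \<Rightarrow> bool) measure" where
  "flip_measure n \<nu> = PiM {..<n} (\<lambda>_. measure_pmf (bernoulli_pmf \<nu>))"

text \<open>Joint law of (z_t, flips), which determines (z_t, y_t).\<close>
definition zt_y_measure :: "nat \<Rightarrow> real \<Rightarrow> ((nat \<Rightarrow> real) \<times> (nat \<Rightarrow> bool)) measure" where
  "zt_y_measure n \<nu> = gauss_vec n \<Otimes>\<^sub>M flip_measure n \<nu>"

definition labels :: "(nat \<Rightarrow> real) \<Rightarrow> (nat \<Rightarrow> bool) \<Rightarrow> nat \<Rightarrow> real" where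
  "labels zt fl i = (if fl i then - sgn (zt i) else sgn (zt i))"

definition full_z :: "nat \<Rightarrow> (nat \<Rightarrow> nat \<Rightarrow> real) \<Rightarrow> (nat \<Rightarrow> real) \<Rightarrow> nat \<Rightarrow> nat \<Rightarrow> real" where
  "full_z t zs zt j = (if j = t then zt else zs j)"

definition wgram :: "nat \<Rightarrow> nat set \<Rightarrow> (nat \<Rightarrow> real) \<Rightarrow> (nat \<Rightarrow> nat \<Rightarrow> real) \<Rightarrow> real mat" where
  "wgram n J w z = mat n n (\<lambda>(i,k). \<Sum>j\<in>J. w j * z j i * z j k)"

definition minv :: "real mat \<Rightarrow> real mat" where
  "minv M = the (mat_inverse M)"

definition mtrace :: "real mat \<Rightarrow> real" where
  "mtrace M = (\<Sum>i<dim_row M. M $$ (i,i))"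

definition Amat :: "nat \<Rightarrow> nat \<Rightarrow> (nat \<Rightarrow> real) \<Rightarrow> (nat \<Rightarrow> nat \<Rightarrow> real) \<Rightarrow> real mat" where
  "Amat n d lam z = wgram n {..<d} lam z"

definition Amat_minus :: "nat \<Rightarrow> nat \<Rightarrow> nat \<Rightarrow> (nat \<Rightarrow> real) \<Rightarrow> (nat \<Rightarrow> nat \<Rightarrow> real) \<Rightarrow> real mat" where
  "Amat_minus n d t lam z = wgram n ({..<d} - {t}) lam z"

definition Ctilde :: "nat \<Rightarrow> nat \<Rightarrow> nat \<Rightarrow> (nat \<Rightarrow> real) \<Rightarrow> (nat \<Rightarrow> nat \<Rightarrow> real) \<Rightarrow> real mat" where
  "Ctilde n d t lam z =
     minv (Amat_minus n d t lam z) * wgram n ({..<d} - {t}) (\<lambda>j. (lam j)\<^sup>2) z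
       * minv (Amat_minus n d t lam z)"

text \<open>alpha = Phi^T A^{-1} y, so alpha_j = sqrt(lambda_j) z_j^T A^{-1} y and
  SU_b(t) = sqrt(lambda_t) alpha_t = lambda_t z_t^T A^{-1} y.\<close>
definition alpha_hat :: "nat \<Rightarrow> nat \<Rightarrow> (nat \<Rightarrow> real) \<Rightarrow> (nat \<Rightarrow> nat \<Rightarrow> real) \<Rightarrow> (nat \<Rightarrow> real) \<Rightarrow> nat \<Rightarrow> real" where
  "alpha_hat n d lam z y j = sqrt (lam j) * (vec n (z j) \<bullet> (minv (Amat n d lam z) *\<^sub>v vec n y))"

definition SU_b :: "nat \<Rightarrow> nat \<Rightarrow> nat \<Rightarrow> (nat \<Rightarrow> real) \<Rightarrow> (nat \<Rightarrow> nat \<Rightarrow> real) \<Rightarrow> (nat \<Rightarrow> real) \<Rightarrow> real" where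
  "SU_b n d t lam z y = sqrt (lam t) * alpha_hat n d lam z y t"

definition ytilde :: "nat \<Rightarrow> nat \<Rightarrow> nat \<Rightarrow> (nat \<Rightarrow> real) \<Rightarrow> (nat \<Rightarrow> nat \<Rightarrow> real) \<Rightarrow> (nat \<Rightarrow> real) \<Rightarrow> real vec" where
  "ytilde n d t lam z y = vec n y - SU_b n d t lam z y \<cdot>\<^sub>v vec n (z t)"

end

theory Submission
  imports Defs "Jordan_Normal_Form.Determinant"
begin

lemma prob_std_normal: "prob_space std_normal_measure"
  unfolding std_normal_measure_def by (rule prob_space_normal_density) simp

lemma space_std_normal[simp]: "space std_normal_measure = UNIV"
  unfolding std_normal_measure_def by simp

lemma sets_std_normal[simp, measurable_cong]: "sets std_normal_measure = sets borel"
  unfolding std_normal_measure_def by simp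

lemma measurable_std_normal[simp]: "measurable std_normal_measure M = measurable borel M"
  by (rule measurable_cong_sets) auto

lemma nn_integral_normal_density_1: "s > 0 \<Longrightarrow> (\<integral>\<^sup>+x. ennreal (normal_density m s x) \<partial>lborel) = 1"
proof -
  assume "s > 0"
  interpret prob_space "density lborel (normal_density m s)" by (rule prob_space_normal_density) fact
  have "emeasure (density lborel (normal_density m s)) UNIV = 1" using emeasure_space_1 by simp
  thus ?thesis by (simp add: emeasure_density)
qed

lemma gauss_mgf: "(\<integral>\<^sup>+x. ennreal (exp (a * x)) \<partial>std_normal_measure) = ennreal (exp (a\<^sup>2 / 2))"
proof -
  have "(\<integral>\<^sup>+x. ennreal (exp (a * x)) \<partial>std_normal_measure)
      = (\<integral>\<^sup>+x. ennreal (normal_density 0 1 x) * ennreal (exp (a * x)) \<partial>lborel)"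
    unfolding std_normal_measure_def by (subst nn_integral_density) auto
  also have "\<dots> = (\<integral>\<^sup>+x. ennreal (exp (a\<^sup>2 / 2)) * ennreal (normal_density a 1 x) \<partial>lborel)"
  proof (intro nn_integral_cong)
    fix x :: real
    have "normal_density 0 1 x * exp (a * x) = exp (a\<^sup>2 / 2) * normal_density a 1 x"
    proof -
      have "exp (- (x - 0)\<^sup>2 / (2 * 1\<^sup>2)) * exp (a * x) = exp (a\<^sup>2 / 2) * exp (- (x - a)\<^sup>2 / (2 * 1\<^sup>2))"
        unfolding exp_add[symmetric] by (simp add: power2_eq_square field_simps)
      thus ?thesis unfolding normal_density_def by (simp add: ac_simps)
    qed
    thus "ennreal (normal_density 0 1 x) * ennreal (exp (a * x)) = ennreal (exp (a\<^sup>2 / 2)) * ennreal (normal_density a 1 x)"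
      by (simp add: ennreal_mult[symmetric])
  qed
  also have "\<dots> = ennreal (exp (a\<^sup>2 / 2)) * (\<integral>\<^sup>+x. ennreal (normal_density a 1 x) \<partial>lborel)"
    by (rule nn_integral_cmult) auto
  also have "\<dots> = ennreal (exp (a\<^sup>2 / 2))" by (simp add: nn_integral_normal_density_1)
  finally show ?thesis .
qed

lemma gauss_sq4: "(\<integral>\<^sup>+x. ennreal (exp (x\<^sup>2 / 4)) \<partial>std_normal_measure) = ennreal (sqrt 2)"
proof -
  have "(\<integral>\<^sup>+x. ennreal (exp (x\<^sup>2/4)) \<partial>std_normal_measure)
      = (\<integral>\<^sup>+x. ennreal (normal_density 0 1 x) * ennreal (exp (x\<^sup>2/4)) \<partial>lborel)"
    unfolding std_normal_measure_def by (subst nn_integral_density) auto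
  also have "\<dots> = (\<integral>\<^sup>+x. ennreal (sqrt 2) * ennreal (normal_density 0 (sqrt 2) x) \<partial>lborel)"
  proof (intro nn_integral_cong)
    fix x :: real
    have "normal_density 0 1 x * exp (x\<^sup>2/4) = sqrt 2 * normal_density 0 (sqrt 2) x"
    proof -
      have e: "exp (- (x - 0)\<^sup>2 / (2 * 1\<^sup>2)) * exp (x\<^sup>2/4) = exp (- (x - 0)\<^sup>2 / (2 * (sqrt 2)\<^sup>2))"
        unfolding exp_add[symmetric] by (simp add: power2_eq_square field_simps)
      have s: "sqrt (2 * pi * (sqrt 2)\<^sup>2) = sqrt (2*pi) * sqrt 2"
        by (simp add: real_sqrt_mult)
      show ?thesis unfolding normal_density_def s
        using e by (simp add: field_simps)
    qed
    thus "ennreal (normal_density 0 1 x) * ennreal (exp (x\<^sup>2/4)) = ennreal (sqrt 2) * ennreal (normal_density 0 (sqrt 2) x)"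
      by (simp add: ennreal_mult[symmetric])
  qed
  also have "\<dots> = ennreal (sqrt 2) * (\<integral>\<^sup>+x. ennreal (normal_density 0 (sqrt 2) x) \<partial>lborel)"
    by (rule nn_integral_cmult) auto
  also have "\<dots> = ennreal (sqrt 2)" by (simp add: nn_integral_normal_density_1)
  finally show ?thesis .
qed

lemma std_normal_sym:
  assumes [measurable]: "f \<in> borel_measurable borel"
  shows "(\<integral>\<^sup>+x. f (- x) \<partial>std_normal_measure) = (\<integral>\<^sup>+x. f x \<partial>std_normal_measure)"
proof -
  have "(\<integral>\<^sup>+x. f x \<partial>std_normal_measure) = (\<integral>\<^sup>+x. ennreal (normal_density 0 1 x) * f x \<partial>lborel)"
    unfolding std_normal_measure_def by (subst nn_integral_density) auto
  also have "\<dots> = ennreal \<bar>-1\<bar> * (\<integral>\<^sup>+x. ennreal (normal_density 0 1 (0 + -1 * x)) * f (0 + -1 * x) \<partial>lborel)"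
    by (rule nn_integral_real_affine) auto
  also have "\<dots> = (\<integral>\<^sup>+x. ennreal (normal_density 0 1 x) * f (- x) \<partial>lborel)"
    by (simp add: normal_density_def)
  also have "\<dots> = (\<integral>\<^sup>+x. f (- x) \<partial>std_normal_measure)"
    unfolding std_normal_measure_def by (subst nn_integral_density) auto
  finally show ?thesis by simp
qed

lemma cosh_le_exp_sq: "cosh (b::real) \<le> exp (b\<^sup>2 / 2)"
proof -
  have main: "cosh b \<le> exp (b\<^sup>2 / 2)" if b: "b \<ge> 0" for b :: real
  proof -
    have "-(2*b) * (1/2) + ln (1 + (1/2) * (exp (2*b) - 1)) \<le> (2*b)\<^sup>2 / 8"
      using Hoeffdings_lemma_aux[of "2*b" "1/2"] b by simp
    moreover have "-(2*b) * (1/2) + ln (1 + (1/2) * (exp (2*b) - 1)) = ln (cosh b)"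
    proof -
      have "1 + (1/2) * (exp (2*b) - 1) = exp b * cosh b"
        by (simp add: cosh_def exp_add[symmetric] exp_minus field_simps mult_exp_exp)
      hence "ln (1 + (1/2) * (exp (2*b) - 1)) = b + ln (cosh b)"
        by (simp add: ln_mult cosh_real_pos)
      thus ?thesis by simp
    qed
    ultimately have "ln (cosh b) \<le> b\<^sup>2 / 2" by (simp add: power2_eq_square)
    thus ?thesis by (metis cosh_real_pos exp_le_cancel_iff exp_ln)
  qed
  show ?thesis
  proof (cases "b \<ge> 0")
    case True thus ?thesis by (rule main)
  next
    case False thus ?thesis using main[of "-b"] by simp
  qed
qed

lemma rad_mgf: "(\<integral>\<^sup>+x. ennreal (exp (b * sgn x)) \<partial>std_normal_measure) \<le> ennreal (exp (b\<^sup>2 / 2))"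
proof -
  interpret prob_space std_normal_measure by (rule prob_std_normal)
  let ?f = "\<lambda>x::real. ennreal (exp (b * sgn x))"
  have m: "?f \<in> borel_measurable borel" by measurable
  have "2 * (\<integral>\<^sup>+x. ?f x \<partial>std_normal_measure) = (\<integral>\<^sup>+x. ?f x \<partial>std_normal_measure) + (\<integral>\<^sup>+x. ?f (-x) \<partial>std_normal_measure)"
    using std_normal_sym[OF m] by (simp add: mult_2)
  also have "\<dots> = (\<integral>\<^sup>+x. ?f x + ?f (-x) \<partial>std_normal_measure)"
    by (rule nn_integral_add[symmetric]) (use m in auto)
  also have "\<dots> \<le> (\<integral>\<^sup>+x. ennreal (2 * cosh b) \<partial>std_normal_measure)"
  proof (intro nn_integral_mono)
    fix x :: real
    have "exp (b * sgn x) + exp (b * sgn (-x)) \<le> 2 * cosh b"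
    proof -
      have "sgn x = 1 \<or> sgn x = -1 \<or> sgn x = 0" by (simp add: sgn_real_def)
      moreover have "2 \<le> 2 * cosh b" using cosh_real_ge_1[of b] by simp
      ultimately show ?thesis by (auto simp: cosh_def exp_minus)
    qed
    thus "?f x + ?f (-x) \<le> ennreal (2 * cosh b)"
      by (simp add: ennreal_plus[symmetric] del: ennreal_plus)
  qed
  also have "\<dots> = ennreal (2 * cosh b)" using emeasure_space_1 by simp
  finally have "2 * (\<integral>\<^sup>+x. ?f x \<partial>std_normal_measure) \<le> 2 * ennreal (cosh b)"
    by (simp add: ennreal_mult)
  hence "(\<integral>\<^sup>+x. ?f x \<partial>std_normal_measure) \<le> ennreal (cosh b)"
    by (simp add: ennreal_mult_le_mult_iff)
  also have "\<dots> \<le> ennreal (exp (b\<^sup>2 / 2))" using cosh_le_exp_sq by simp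
  finally show ?thesis .
qed

lemma prob_gauss_vec: "prob_space (gauss_vec n)"
  unfolding gauss_vec_def by (rule prob_space_PiM) (rule prob_std_normal)

lemma psf_std: "product_sigma_finite (\<lambda>_::nat. std_normal_measure)"
  by (rule product_sigma_finite.intro) (rule prob_space_imp_sigma_finite[OF prob_std_normal])

lemma gauss_vec_mgf_gen:
  assumes [measurable]: "\<And>i. g i \<in> borel_measurable borel"
  shows "(\<integral>\<^sup>+x. (\<Prod>i<n. ennreal (g i (x i))) \<partial>gauss_vec n) = (\<Prod>i<n. \<integral>\<^sup>+t. ennreal (g i t) \<partial>std_normal_measure)"
  unfolding gauss_vec_def
  by (rule product_sigma_finite.product_nn_integral_prod[OF psf_std]) auto

lemma gauss_vec_mgf:
  "(\<integral>\<^sup>+x. ennreal (exp (\<Sum>i<n. a i * x i)) \<partial>gauss_vec n) = ennreal (exp (\<Sum>i<n. (a i)\<^sup>2 / 2))"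
proof -
  have "(\<integral>\<^sup>+x. ennreal (exp (\<Sum>i<n. a i * x i)) \<partial>gauss_vec n) = (\<integral>\<^sup>+x. (\<Prod>i<n. ennreal (exp (a i * x i))) \<partial>gauss_vec n)"
    by (simp add: exp_sum prod_ennreal)
  also have "\<dots> = (\<Prod>i<n. \<integral>\<^sup>+t. ennreal (exp (a i * t)) \<partial>std_normal_measure)"
    by (rule gauss_vec_mgf_gen[where g = "\<lambda>i t. exp (a i * t)"]) auto
  also have "\<dots> = (\<Prod>i<n. ennreal (exp ((a i)\<^sup>2 / 2)))" by (simp add: gauss_mgf)
  also have "\<dots> = ennreal (exp (\<Sum>i<n. (a i)\<^sup>2 / 2))" by (simp add: exp_sum prod_ennreal)
  finally show ?thesis .
qed

lemma labels_eq: "labels zt fl i = (if fl i then -1 else 1) * sgn (zt i)"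
  by (simp add: labels_def)

lemma rad_vec_mgf:
  "(\<integral>\<^sup>+x. ennreal (exp (\<Sum>i<n. a i * labels x fl i)) \<partial>gauss_vec n) \<le> ennreal (exp (\<Sum>i<n. (a i)\<^sup>2 / 2))"
proof -
  let ?s = "\<lambda>i. (if fl i then -1 else 1::real)"
  have "(\<integral>\<^sup>+x. ennreal (exp (\<Sum>i<n. a i * labels x fl i)) \<partial>gauss_vec n) = (\<integral>\<^sup>+x. (\<Prod>i<n. ennreal (exp (a i * ?s i * sgn (x i)))) \<partial>gauss_vec n)"
    by (simp add: exp_sum prod_ennreal labels_eq mult.assoc)
  also have "\<dots> = (\<Prod>i<n. \<integral>\<^sup>+t. ennreal (exp (a i * ?s i * sgn t)) \<partial>std_normal_measure)"
    by (rule gauss_vec_mgf_gen[where g = "\<lambda>i t. exp (a i * ?s i * sgn t)"]) auto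
  also have "\<dots> \<le> (\<Prod>i<n. ennreal (exp ((a i * ?s i)\<^sup>2 / 2)))"
    by (intro prod_mono_ennreal) (rule rad_mgf)
  also have "\<dots> = (\<Prod>i<n. ennreal (exp ((a i)\<^sup>2 / 2)))"
    by (intro prod.cong refl) (simp add: power_mult_distrib)
  also have "\<dots> = ennreal (exp (\<Sum>i<n. (a i)\<^sup>2 / 2))"
    by (simp add: exp_sum prod_ennreal)
  finally show ?thesis .
qed

lemma sq_exp_bound:
  fixes M :: "'a measure" and Y :: "nat \<Rightarrow> 'a \<Rightarrow> real" and u :: "nat \<Rightarrow> real"
  assumes M: "prob_space M" and Ym: "\<And>i. i < n \<Longrightarrow> Y i \<in> borel_measurable M"
  and mgf: "\<And>a. (\<integral>\<^sup>+x. ennreal (exp (\<Sum>i<n. a i * Y i x)) \<partial>M) \<le> ennreal (exp (\<Sum>i<n. (a i)\<^sup>2 / 2))"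
  and r: "r = (\<Sum>i<n. (u i)\<^sup>2)" "r > 0"
  shows "(\<integral>\<^sup>+x. ennreal (exp ((\<Sum>i<n. u i * Y i x)\<^sup>2 / (4*r))) \<partial>M) \<le> ennreal (sqrt 2)"
proof -
  interpret M: prob_space M by fact
  interpret N: prob_space std_normal_measure by (rule prob_std_normal)
  interpret P: pair_sigma_finite M std_normal_measure
    by (rule pair_sigma_finite.intro) (simp_all add: M.sigma_finite_measure N.sigma_finite_measure)
  define S where "S x = (\<Sum>i<n. u i * Y i x)" for x
  define c where "c = 1 / sqrt (2 * r)"
  have Sm[measurable]: "S \<in> borel_measurable M"
    unfolding S_def by (intro borel_measurable_sum borel_measurable_times borel_measurable_const Ym) auto
  have c2: "c\<^sup>2 = 1 / (2 * r)" unfolding c_def using r(2) by (simp add: power_divide)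
  have "(\<integral>\<^sup>+x. ennreal (exp ((S x)\<^sup>2 / (4*r))) \<partial>M) = (\<integral>\<^sup>+x. \<integral>\<^sup>+g. ennreal (exp ((c * S x) * g)) \<partial>std_normal_measure \<partial>M)"
  proof (intro nn_integral_cong)
    fix x
    have "(S x)\<^sup>2 / (4*r) = (c * S x)\<^sup>2 / 2" using r(2) by (simp add: power_mult_distrib c2)
    thus "ennreal (exp ((S x)\<^sup>2 / (4*r))) = (\<integral>\<^sup>+g. ennreal (exp ((c * S x) * g)) \<partial>std_normal_measure)"
      by (simp add: gauss_mgf)
  qed
  also have "\<dots> = (\<integral>\<^sup>+g. \<integral>\<^sup>+x. ennreal (exp ((c * S x) * g)) \<partial>M \<partial>std_normal_measure)"
    by (rule P.Fubini'[symmetric]) measurable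
  also have "\<dots> \<le> (\<integral>\<^sup>+g. ennreal (exp (g\<^sup>2 / 4)) \<partial>std_normal_measure)"
  proof (intro nn_integral_mono)
    fix g :: real
    have "(\<integral>\<^sup>+x. ennreal (exp ((c * S x) * g)) \<partial>M) = (\<integral>\<^sup>+x. ennreal (exp (\<Sum>i<n. (c * g * u i) * Y i x)) \<partial>M)"
      unfolding S_def by (simp add: sum_distrib_left sum_distrib_right ac_simps)
    also have "\<dots> \<le> ennreal (exp (\<Sum>i<n. (c * g * u i)\<^sup>2 / 2))" by (rule mgf)
    also have "(\<Sum>i<n. (c * g * u i)\<^sup>2 / 2) = g\<^sup>2 / 4"
    proof -
      have "(\<Sum>i<n. (c * g * u i)\<^sup>2 / 2) = c\<^sup>2 * g\<^sup>2 / 2 * (\<Sum>i<n. (u i)\<^sup>2)"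
        by (simp add: sum_distrib_left power_mult_distrib ac_simps)
      also have "\<dots> = g\<^sup>2 / 4" using r by (simp add: c2)
      finally show ?thesis .
    qed
    finally show "(\<integral>\<^sup>+x. ennreal (exp ((c * S x) * g)) \<partial>M) \<le> ennreal (exp (g\<^sup>2 / 4))" .
  qed
  also have "\<dots> = ennreal (sqrt 2)" by (rule gauss_sq4)
  finally show ?thesis unfolding S_def .
qed

lemma quad_exp_bound:
  fixes M :: "'a measure" and Y :: "nat \<Rightarrow> 'a \<Rightarrow> real" and w :: "'j \<Rightarrow> nat \<Rightarrow> real"
  assumes M: "prob_space M" and Ym: "\<And>i. i < n \<Longrightarrow> Y i \<in> borel_measurable M"
  and mgf: "\<And>a. (\<integral>\<^sup>+x. ennreal (exp (\<Sum>i<n. a i * Y i x)) \<partial>M) \<le> ennreal (exp (\<Sum>i<n. (a i)\<^sup>2 / 2))"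
  and J: "finite J" and T: "T = (\<Sum>j\<in>J. \<Sum>i<n. (w j i)\<^sup>2)" "T > 0"
  shows "(\<integral>\<^sup>+x. ennreal (exp ((\<Sum>j\<in>J. (\<Sum>i<n. w j i * Y i x)\<^sup>2) / (4*T))) \<partial>M) \<le> ennreal (sqrt 2)"
proof -
  define r where "r j = (\<Sum>i<n. (w j i)\<^sup>2)" for j
  define S where "S = {j\<in>J. r j > 0}"
  have r0: "r j \<ge> 0" for j unfolding r_def by (simp add: sum_nonneg)
  have notS: "w j i = 0" if "j \<in> J" "j \<notin> S" "i < n" for i j
  proof -
    have "r j = 0" using that r0[of j] unfolding S_def by auto
    hence "\<forall>i\<in>{..<n}. (w j i)\<^sup>2 = 0" unfolding r_def by (subst sum_nonneg_eq_0_iff[symmetric]) auto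
    thus ?thesis using that by auto
  qed
  have SJ: "S \<subseteq> J" "finite S" using J unfolding S_def by auto
  have Q: "(\<Sum>j\<in>J. (\<Sum>i<n. w j i * Y i x)\<^sup>2) = (\<Sum>j\<in>S. (\<Sum>i<n. w j i * Y i x)\<^sup>2)" for x
    by (rule sum.mono_neutral_right) (use J SJ notS in auto)
  have TS: "T = (\<Sum>j\<in>S. r j)"
    unfolding T r_def[symmetric] by (rule sum.mono_neutral_right) (use J SJ r0 S_def in \<open>auto simp: order_less_le\<close>)
  have Sne: "S \<noteq> {}" using TS T(2) by auto
  have "(\<integral>\<^sup>+x. ennreal (exp ((\<Sum>j\<in>J. (\<Sum>i<n. w j i * Y i x)\<^sup>2) / (4*T))) \<partial>M)
      \<le> (\<integral>\<^sup>+x. (\<Sum>j\<in>S. ennreal (r j / T) * ennreal (exp ((\<Sum>i<n. w j i * Y i x)\<^sup>2 / (4 * r j)))) \<partial>M)"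
  proof (intro nn_integral_mono)
    fix x
    let ?q = "\<lambda>j. (\<Sum>i<n. w j i * Y i x)\<^sup>2 / (4 * r j)"
    have "(\<Sum>j\<in>J. (\<Sum>i<n. w j i * Y i x)\<^sup>2) / (4*T) = (\<Sum>j\<in>S. (r j / T) *\<^sub>R ?q j)"
      unfolding Q sum_divide_distrib using T(2) by (intro sum.cong refl) (auto simp: S_def)
    hence "exp ((\<Sum>j\<in>J. (\<Sum>i<n. w j i * Y i x)\<^sup>2) / (4*T)) \<le> (\<Sum>j\<in>S. (r j / T) * exp (?q j))"
      using convex_on_sum[OF SJ(2) Sne exp_convex, of "\<lambda>j. r j / T" ?q] TS T(2) r0
      by (auto simp: sum_divide_distrib[symmetric])
    moreover have "(\<Sum>j\<in>S. ennreal (r j / T) * ennreal (exp (?q j))) = ennreal (\<Sum>j\<in>S. (r j / T) * exp (?q j))"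
      using T(2) r0 by (simp add: ennreal_mult[symmetric] sum_ennreal)
    ultimately show "ennreal (exp ((\<Sum>j\<in>J. (\<Sum>i<n. w j i * Y i x)\<^sup>2) / (4*T))) \<le> (\<Sum>j\<in>S. ennreal (r j / T) * ennreal (exp (?q j)))"
      by (simp add: ennreal_leI)
  qed
  also have "\<dots> = (\<Sum>j\<in>S. ennreal (r j / T) * (\<integral>\<^sup>+x. ennreal (exp ((\<Sum>i<n. w j i * Y i x)\<^sup>2 / (4 * r j))) \<partial>M))"
  proof -
    have m: "(\<lambda>x. \<Sum>i<n. w j i * Y i x) \<in> borel_measurable M" for j
      by (intro borel_measurable_sum borel_measurable_times borel_measurable_const Ym) auto
    show ?thesis
      by (subst nn_integral_sum) (use SJ m in \<open>auto intro!: sum.cong nn_integral_cmult\<close>)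
  qed
  also have "\<dots> \<le> (\<Sum>j\<in>S. ennreal (r j / T) * ennreal (sqrt 2))"
    by (intro sum_mono mult_left_mono sq_exp_bound[OF M Ym mgf]) (auto simp: S_def r_def)
  also have "\<dots> = ennreal (sqrt 2)"
  proof -
    have "(\<Sum>j\<in>S. ennreal (r j / T) * ennreal (sqrt 2)) = ennreal ((\<Sum>j\<in>S. r j / T) * sqrt 2)"
      using r0 T(2) by (simp add: ennreal_mult[symmetric] sum_ennreal sum_distrib_right)
    also have "(\<Sum>j\<in>S. r j / T) = 1" using TS T(2) by (simp add: sum_divide_distrib[symmetric])
    finally show ?thesis by simp
  qed
  finally show ?thesis .
qed

lemma quad_tail:
  fixes M :: "'a measure" and Y :: "nat \<Rightarrow> 'a \<Rightarrow> real" and w :: "'j \<Rightarrow> nat \<Rightarrow> real"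
  assumes M: "prob_space M" and Ym: "\<And>i. i < n \<Longrightarrow> Y i \<in> borel_measurable M"
  and mgf: "\<And>a. (\<integral>\<^sup>+x. ennreal (exp (\<Sum>i<n. a i * Y i x)) \<partial>M) \<le> ennreal (exp (\<Sum>i<n. (a i)\<^sup>2 / 2))"
  and J: "finite J" and T: "T = (\<Sum>j\<in>J. \<Sum>i<n. (w j i)\<^sup>2)" and n: "n \<ge> 2"
  shows "emeasure M {x\<in>space M. 8 * T * ln (real n) < (\<Sum>j\<in>J. (\<Sum>i<n. w j i * Y i x)\<^sup>2)} \<le> ennreal (1 / real n)"
proof (cases "T > 0")
  case False
  have T0: "T = 0" using False T by (metis (no_types, lifting) linorder_not_le order_antisym sum_nonneg zero_le_power2)
  have "w j i = 0" if "j \<in> J" "i < n" for i j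
  proof -
    have "\<forall>j\<in>J. (\<Sum>i<n. (w j i)\<^sup>2) = 0" using T0 T J by (subst sum_nonneg_eq_0_iff[symmetric]) (auto intro: sum_nonneg)
    hence "\<forall>i\<in>{..<n}. (w j i)\<^sup>2 = 0" using that by (subst sum_nonneg_eq_0_iff[symmetric]) auto
    thus ?thesis using that by auto
  qed
  hence E: "{x\<in>space M. 8 * T * ln (real n) < (\<Sum>j\<in>J. (\<Sum>i<n. w j i * Y i x)\<^sup>2)} = {}"
    using T0 by auto
  show ?thesis unfolding E by simp
next
  case True
  interpret M: prob_space M by fact
  define Q where "Q x = (\<Sum>j\<in>J. (\<Sum>i<n. w j i * Y i x)\<^sup>2)" for x
  have Qm: "Q \<in> borel_measurable M"
    unfolding Q_def by (intro borel_measurable_sum borel_measurable_power borel_measurable_times borel_measurable_const Ym) auto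
  define u where "u x = ennreal (exp (Q x / (4*T)))" for x
  have um: "u \<in> borel_measurable M" unfolding u_def using Qm by measurable
  have nn: "real n \<ge> 2" using n by simp
  have sub: "{x\<in>space M. 8 * T * ln (real n) < Q x} \<subseteq> {x\<in>space M. 1 \<le> ennreal (1 / (real n)\<^sup>2) * u x}"
  proof safe
    fix x assume x: "x \<in> space M" "8 * T * ln (real n) < Q x"
    have "2 * ln (real n) < Q x / (4*T)" using x(2) True by (simp add: field_simps)
    hence "exp (2 * ln (real n)) < exp (Q x / (4*T))" by simp
    moreover have "exp (2 * ln (real n)) = (real n)\<^sup>2"
    proof -
      have "2 * ln (real n) = ln ((real n)^2)" using nn by (simp add: ln_realpow)
      thus ?thesis using nn by simp
    qed
    ultimately have "1 \<le> 1 / (real n)\<^sup>2 * exp (Q x / (4*T))" using nn by (simp add: field_simps)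
    thus "1 \<le> ennreal (1 / (real n)\<^sup>2) * u x" unfolding u_def
      by (simp add: ennreal_mult[symmetric] ennreal_1[symmetric] del: ennreal_1)
  qed
  have "emeasure M {x\<in>space M. 8 * T * ln (real n) < Q x} \<le> emeasure M {x\<in>space M. 1 \<le> ennreal (1 / (real n)\<^sup>2) * u x}"
    by (rule emeasure_mono[OF sub]) (use um in measurable)
  also have "\<dots> \<le> ennreal (1 / (real n)\<^sup>2) * set_nn_integral M (space M) u"
    by (rule nn_integral_Markov_inequality) (use um in auto)
  also have "set_nn_integral M (space M) u = (\<integral>\<^sup>+x. u x \<partial>M)"
    by (rule nn_integral_cong) auto
  also have "(\<integral>\<^sup>+x. u x \<partial>M) \<le> ennreal (sqrt 2)"
    unfolding u_def Q_def by (rule quad_exp_bound[OF M Ym mgf J T True])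
  finally have "emeasure M {x\<in>space M. 8 * T * ln (real n) < Q x} \<le> ennreal (1 / (real n)\<^sup>2) * ennreal (sqrt 2)"
    by (simp add: mult_left_mono)
  also have "\<dots> = ennreal (sqrt 2 / (real n)\<^sup>2)" by (simp add: ennreal_mult[symmetric])
  also have "\<dots> \<le> ennreal (1 / real n)"
  proof -
    have "sqrt 2 \<le> real n" using nn by (smt (verit) real_sqrt_le_iff real_sqrt_four real_sqrt_le_mono)
    hence "sqrt 2 / (real n)\<^sup>2 \<le> 1 / real n" using nn by (simp add: field_simps power2_eq_square)
    thus ?thesis by simp
  qed
  finally show ?thesis unfolding Q_def .
qed

lemma AE_nonzero_gen:
  fixes B :: "'b measure" and Aff :: "('b \<Rightarrow> real) \<Rightarrow> bool" and P :: "'b set"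
  assumes B: "prob_space B"
  and H1: "\<And>h. Aff h \<Longrightarrow> h \<in> borel_measurable B \<Longrightarrow> (\<exists>y\<in>space B. h y \<noteq> 0) \<Longrightarrow> emeasure B {y\<in>space B. h y = 0} = 0"
  and H2: "\<And>h y. Aff h \<Longrightarrow> (\<forall>p\<in>P. h p = 0) \<Longrightarrow> y \<in> space B \<Longrightarrow> h y = 0"
  and PB: "P \<subseteq> space B"
  shows "finite V \<Longrightarrow> f \<in> borel_measurable (PiM V (\<lambda>_. B)) \<Longrightarrow>
    (\<forall>v\<in>V. \<forall>x\<in>space (PiM V (\<lambda>_. B)). Aff (\<lambda>y. f (x(v:=y)))) \<Longrightarrow>
    (\<exists>x\<in>space (PiM V (\<lambda>_. B)). f x \<noteq> 0) \<Longrightarrow> AE x in PiM V (\<lambda>_. B). f x \<noteq> 0"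
proof (induction V arbitrary: f rule: finite_induct)
  case empty
  then show ?case by (intro AE_I2) (auto simp: space_PiM_empty)
next
  case (insert v W f)
  interpret B: prob_space B by fact
  interpret PS: product_sigma_finite "\<lambda>_::'a. B"
    by (rule product_sigma_finite.intro) (rule B.sigma_finite_measure)
  have fm[measurable]: "f \<in> borel_measurable (PiM (insert v W) (\<lambda>_. B))" by fact
  have upd_space: "x(v:=y) \<in> space (PiM (insert v W) (\<lambda>_. B))" if "x \<in> space (PiM W (\<lambda>_. B))" "y \<in> space B" for x y
    using that by (auto simp: space_PiM PiE_def extensional_def Pi_def)
  have upd_meas: "(\<lambda>x. x(v:=p)) \<in> measurable (PiM W (\<lambda>_. B)) (PiM (insert v W) (\<lambda>_. B))" if "p \<in> space B" for p
  proof -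
    have "(\<lambda>x. \<lambda>i. (if i = v then (\<lambda>_. p) else (\<lambda>x. x i)) x) \<in> measurable (PiM W (\<lambda>_. B)) (PiM (insert v W) (\<lambda>_. B))"
    proof (rule measurable_PiM_single')
      fix i assume "i \<in> insert v W"
      thus "(if i = v then (\<lambda>_. p) else (\<lambda>x. x i)) \<in> measurable (PiM W (\<lambda>_. B)) B"
        using that by auto
    next
      show "(\<lambda>x i. (if i = v then (\<lambda>_. p) else (\<lambda>x. x i)) x) \<in> space (PiM W (\<lambda>_. B)) \<rightarrow> (\<Pi>\<^sub>E i\<in>insert v W. space B)"
        using that insert.hyps by (auto simp: space_PiM PiE_def extensional_def Pi_def)
    qed
    moreover have "(\<lambda>x. \<lambda>i. (if i = v then (\<lambda>_. p) else (\<lambda>x. x i)) x) = (\<lambda>x. x(v:=p))"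
      by (auto simp: fun_eq_iff)
    ultimately show ?thesis by simp
  qed
  have hm: "(\<lambda>y. f (x(v:=y))) \<in> borel_measurable B" if "x \<in> space (PiM W (\<lambda>_. B))" for x
    using measurable_component_update[OF that insert.hyps(2)] fm by (rule measurable_compose)
  show ?case
  proof (cases "\<exists>p\<in>P. \<exists>x\<in>space (PiM W (\<lambda>_. B)). f (x(v:=p)) \<noteq> 0")
    case True
    then obtain p x0 where p: "p \<in> P" and x0: "x0 \<in> space (PiM W (\<lambda>_. B))" "f (x0(v:=p)) \<noteq> 0" by blast
    have pB: "p \<in> space B" using p PB by auto
    have "AE x in PiM W (\<lambda>_. B). f (x(v:=p)) \<noteq> 0"
    proof (rule insert.IH)
      show "(\<lambda>x. f (x(v:=p))) \<in> borel_measurable (PiM W (\<lambda>_. B))"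
        using upd_meas[OF pB] fm by (rule measurable_compose)
      show "\<forall>w\<in>W. \<forall>x\<in>space (PiM W (\<lambda>_. B)). Aff (\<lambda>y. f ((x(w:=y))(v:=p)))"
      proof (intro ballI)
        fix w x assume w: "w \<in> W" and x: "x \<in> space (PiM W (\<lambda>_. B))"
        have "w \<noteq> v" using w insert.hyps by auto
        hence "(\<lambda>y. f ((x(w:=y))(v:=p))) = (\<lambda>y. f ((x(v:=p))(w:=y)))" by (simp add: fun_upd_twist)
        moreover have "Aff (\<lambda>y. f ((x(v:=p))(w:=y)))"
          using insert.prems(2) w upd_space[OF x pB] by (meson insertCI)
        ultimately show "Aff (\<lambda>y. f ((x(w:=y))(v:=p)))" by simp
      qed
    qed (rule bexI[of _ x0], use x0 in \<open>simp_all add: fun_upd_def\<close>)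
    hence AE0: "AE x in PiM W (\<lambda>_. B). emeasure B {y\<in>space B. f (x(v:=y)) = 0} = 0"
    proof (rule AE_mp[OF _ AE_I2], intro impI)
      fix x assume x: "x \<in> space (PiM W (\<lambda>_. B))" and fx: "f (x(v:=p)) \<noteq> 0"
      show "emeasure B {y\<in>space B. f (x(v:=y)) = 0} = 0"
      proof (rule H1)
        have "Aff (\<lambda>y. f ((x(v:=p))(v:=y)))" using insert.prems(2) upd_space[OF x pB] by (meson insertI1)
        thus "Aff (\<lambda>y. f (x(v:=y)))" by simp
        show "(\<lambda>y. f (x(v:=y))) \<in> borel_measurable B" by (rule hm[OF x])
      qed (use fx pB in auto)
    qed
    let ?Z = "{x\<in>space (PiM (insert v W) (\<lambda>_. B)). f x = 0}"
    have Zs: "?Z \<in> sets (PiM (insert v W) (\<lambda>_. B))" by measurable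
    have "emeasure (PiM (insert v W) (\<lambda>_. B)) ?Z = (\<integral>\<^sup>+x. indicator ?Z x \<partial>PiM (insert v W) (\<lambda>_. B))"
      using Zs by simp
    also have "\<dots> = (\<integral>\<^sup>+x. \<integral>\<^sup>+y. indicator ?Z (x(v:=y)) \<partial>B \<partial>PiM W (\<lambda>_. B))"
      by (rule PS.product_nn_integral_insert) (use insert.hyps Zs in auto)
    also have "\<dots> = (\<integral>\<^sup>+x. emeasure B {y\<in>space B. f (x(v:=y)) = 0} \<partial>PiM W (\<lambda>_. B))"
    proof (intro nn_integral_cong)
      fix x assume x: "x \<in> space (PiM W (\<lambda>_. B))"
      have "{y\<in>space B. f (x(v:=y)) = 0} \<in> sets B" using hm[OF x] by measurable
      hence "emeasure B {y\<in>space B. f (x(v:=y)) = 0} = (\<integral>\<^sup>+y. indicator {y\<in>space B. f (x(v:=y)) = 0} y \<partial>B)"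
        by simp
      also have "\<dots> = (\<integral>\<^sup>+y. indicator ?Z (x(v:=y)) \<partial>B)"
        by (intro nn_integral_cong) (use upd_space[OF x] in \<open>auto simp: indicator_def\<close>)
      finally show "(\<integral>\<^sup>+y. indicator ?Z (x(v:=y)) \<partial>B) = emeasure B {y\<in>space B. f (x(v:=y)) = 0}" by simp
    qed
    also have "\<dots> = (\<integral>\<^sup>+x. 0 \<partial>PiM W (\<lambda>_. B))"
      by (rule nn_integral_cong_AE) (use AE0 in auto)
    finally have "emeasure (PiM (insert v W) (\<lambda>_. B)) ?Z = 0" by simp
    thus ?thesis by (subst AE_iff_measurable[OF Zs]) auto
  next
    case False
    have "f x = 0" if x: "x \<in> space (PiM (insert v W) (\<lambda>_. B))" for x
    proof -
      define x' where "x' = x(v:=undefined)"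
      have x': "x' \<in> space (PiM W (\<lambda>_. B))" using x insert.hyps
        by (auto simp: x'_def space_PiM PiE_def extensional_def Pi_def)
      have xv: "x v \<in> space B" using x by (auto simp: space_PiM)
      have eq: "x = x'(v := x v)" by (simp add: x'_def)
      have "Aff (\<lambda>y. f (x(v:=y)))" using insert.prems(2) x by (meson insertI1)
      hence "Aff (\<lambda>y. f (x'(v:=y)))" by (simp add: x'_def)
      moreover have "\<forall>p\<in>P. f (x'(v:=p)) = 0" using False x' by auto
      ultimately have "f (x'(v := x v)) = 0" by (rule H2[where h = "\<lambda>y. f (x'(v:=y))", OF _ _ xv])
      thus ?thesis using eq by simp
    qed
    thus ?thesis using insert.prems(3) by auto
  qed
qed

lemma std_normal_singleton: "emeasure std_normal_measure {c} = 0"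
proof -
  have "emeasure std_normal_measure {c} = (\<integral>\<^sup>+x. ennreal (normal_density 0 1 x) * indicator {c} x \<partial>lborel)"
    unfolding std_normal_measure_def by (subst emeasure_density) auto
  also have "\<dots> = ennreal (normal_density 0 1 c) * emeasure lborel {c}"
    by (rule nn_integral_indicator_singleton) auto
  finally show ?thesis by simp
qed

lemma AE_hyperplane:
  fixes a :: "nat \<Rightarrow> real"
  assumes "\<exists>y\<in>space (gauss_vec n). (\<Sum>i<n. a i * y i) + b \<noteq> 0"
  shows "AE y in gauss_vec n. (\<Sum>i<n. a i * y i) + b \<noteq> 0"
  unfolding gauss_vec_def
proof (rule AE_nonzero_gen[where Aff = "\<lambda>h. \<exists>\<alpha> \<beta>. \<forall>y. h y = \<alpha> * y + \<beta>" and P = "{0,1}"])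
  show "prob_space std_normal_measure" by (rule prob_std_normal)
next
  fix h :: "real \<Rightarrow> real"
  assume "\<exists>\<alpha> \<beta>. \<forall>y. h y = \<alpha> * y + \<beta>" and nz: "\<exists>y\<in>space std_normal_measure. h y \<noteq> 0"
  then obtain \<alpha> \<beta> where h: "\<And>y. h y = \<alpha> * y + \<beta>" by blast
  show "emeasure std_normal_measure {y\<in>space std_normal_measure. h y = 0} = 0"
  proof (cases "\<alpha> = 0")
    case True
    hence "{y\<in>space std_normal_measure. h y = 0} = {}" using nz h by auto
    thus ?thesis by simp
  next
    case False
    hence "{y\<in>space std_normal_measure. h y = 0} = {- \<beta> / \<alpha>}" using h by (auto simp: field_simps)
    thus ?thesis by (simp add: std_normal_singleton)
  qed
next
  fix h :: "real \<Rightarrow> real" and y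
  assume "\<exists>\<alpha> \<beta>. \<forall>y. h y = \<alpha> * y + \<beta>" and "\<forall>p\<in>{0,1}. h p = 0"
  thus "h y = 0" by auto
next
  show "(\<lambda>y. (\<Sum>i<n. a i * y i) + b) \<in> borel_measurable (PiM {..<n} (\<lambda>_. std_normal_measure))"
    by measurable
next
  show "\<forall>v\<in>{..<n}. \<forall>x\<in>space (PiM {..<n} (\<lambda>_. std_normal_measure)).
          \<exists>\<alpha> \<beta>. \<forall>y. (\<Sum>i<n. a i * (x(v:=y)) i) + b = \<alpha> * y + \<beta>"
  proof (intro ballI)
    fix v x assume v: "v \<in> {..<n}"
    have "(\<Sum>i<n. a i * (x(v:=y)) i) + b = a v * y + ((\<Sum>i\<in>{..<n}-{v}. a i * x i) + b)" for y
    proof -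
      have "(\<Sum>i<n. a i * (x(v:=y)) i) = a v * y + (\<Sum>i\<in>{..<n}-{v}. a i * (x(v:=y)) i)"
        using v by (subst sum.remove[of _ v]) auto
      also have "(\<Sum>i\<in>{..<n}-{v}. a i * (x(v:=y)) i) = (\<Sum>i\<in>{..<n}-{v}. a i * x i)"
        by (intro sum.cong) auto
      finally show ?thesis by simp
    qed
    thus "\<exists>\<alpha> \<beta>. \<forall>y. (\<Sum>i<n. a i * (x(v:=y)) i) + b = \<alpha> * y + \<beta>" by blast
  qed
qed (use assms in \<open>auto simp: gauss_vec_def\<close>)

definition zvec :: "nat \<Rightarrow> nat \<Rightarrow> real" where "zvec n = (\<lambda>i\<in>{..<n}. 0)"
definition evec :: "nat \<Rightarrow> nat \<Rightarrow> nat \<Rightarrow> real" where "evec n k = (\<lambda>i\<in>{..<n}. if i = k then 1 else 0)"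

lemma space_gauss_vec: "space (gauss_vec n) = {..<n} \<rightarrow>\<^sub>E UNIV"
  unfolding gauss_vec_def by (simp add: space_PiM)

lemma zs: "zvec n \<in> space (gauss_vec n)" by (simp add: space_gauss_vec zvec_def)
lemma es: "evec n k \<in> space (gauss_vec n)" by (simp add: space_gauss_vec evec_def)

lemma AE_multilinear:
  fixes f :: "('v \<Rightarrow> nat \<Rightarrow> real) \<Rightarrow> real"
  assumes V: "finite V" and fm: "f \<in> borel_measurable (PiM V (\<lambda>_. gauss_vec n))"
  and MA: "\<forall>v\<in>V. \<forall>x\<in>space (PiM V (\<lambda>_. gauss_vec n)). \<exists>a b. \<forall>y\<in>space (gauss_vec n). f (x(v:=y)) = (\<Sum>i<n. a i * y i) + b"
  and nz: "\<exists>x\<in>space (PiM V (\<lambda>_. gauss_vec n)). f x \<noteq> 0"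
  shows "AE x in PiM V (\<lambda>_. gauss_vec n). f x \<noteq> 0"
proof (rule AE_nonzero_gen[where Aff = "\<lambda>h. \<exists>a b. \<forall>y\<in>space (gauss_vec n). h y = (\<Sum>i<n. a i * y i) + b"
      and P = "insert (zvec n) (evec n ` {..<n})", OF prob_gauss_vec _ _ _ V fm MA nz])
  fix h :: "(nat \<Rightarrow> real) \<Rightarrow> real"
  assume "\<exists>a b. \<forall>y\<in>space (gauss_vec n). h y = (\<Sum>i<n. a i * y i) + b" and hm: "h \<in> borel_measurable (gauss_vec n)"
    and hnz: "\<exists>y\<in>space (gauss_vec n). h y \<noteq> 0"
  then obtain a b where h: "\<And>y. y \<in> space (gauss_vec n) \<Longrightarrow> h y = (\<Sum>i<n. a i * y i) + b" by blast
  have "AE y in gauss_vec n. (\<Sum>i<n. a i * y i) + b \<noteq> 0"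
    by (rule AE_hyperplane) (use hnz h in auto)
  hence "AE y in gauss_vec n. h y \<noteq> 0" by (rule AE_mp[OF _ AE_I2]) (use h in auto)
  moreover have "{y\<in>space (gauss_vec n). h y = 0} \<in> sets (gauss_vec n)" using hm by measurable
  ultimately show "emeasure (gauss_vec n) {y\<in>space (gauss_vec n). h y = 0} = 0"
    by (subst (asm) AE_iff_measurable) auto
next
  fix h :: "(nat \<Rightarrow> real) \<Rightarrow> real" and y
  assume "\<exists>a b. \<forall>y\<in>space (gauss_vec n). h y = (\<Sum>i<n. a i * y i) + b"
    and P: "\<forall>p\<in>insert (zvec n) (evec n ` {..<n}). h p = 0" and y: "y \<in> space (gauss_vec n)"
  then obtain a b where h: "\<And>y. y \<in> space (gauss_vec n) \<Longrightarrow> h y = (\<Sum>i<n. a i * y i) + b" by blast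
  have "h (zvec n) = b" using h[OF zs] by (simp add: zvec_def)
  hence b: "b = 0" using P by auto
  have "a k = 0" if k: "k < n" for k
  proof -
    have "(\<Sum>i<n. a i * evec n k i) = (\<Sum>i<n. if i = k then a i else 0)"
      by (intro sum.cong) (auto simp: evec_def)
    also have "\<dots> = a k" using k by simp
    finally have "(\<Sum>i<n. a i * evec n k i) = a k" .
    hence "h (evec n k) = a k + b" using h[OF es] by simp
    thus ?thesis using P k b by auto
  qed
  thus "h y = 0" using h[OF y] b by simp
next
  show "insert (zvec n) (evec n ` {..<n}) \<subseteq> space (gauss_vec n)"
    using es zs by auto
qed

lemma smult_smult_mat: "(a::real) \<cdot>\<^sub>m (b \<cdot>\<^sub>m M) = (a * b) \<cdot>\<^sub>m M"
  by (rule eq_matI) auto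

lemma one_smult_mat: "(1::real) \<cdot>\<^sub>m M = M"
  by (rule eq_matI) auto

lemma minv_eq:
  fixes A :: "real mat"
  assumes A: "A \<in> carrier_mat m m" and d: "Determinant.det A \<noteq> 0"
  shows "minv A = (1 / Determinant.det A) \<cdot>\<^sub>m adj_mat A" "A * minv A = 1\<^sub>m m" "minv A * A = 1\<^sub>m m" "minv A \<in> carrier_mat m m"
proof -
  define B where "B = (1 / Determinant.det A) \<cdot>\<^sub>m adj_mat A"
  have Bc: "B \<in> carrier_mat m m" unfolding B_def using adj_mat(1)[OF A] by simp
  have AB: "A * B = 1\<^sub>m m" unfolding B_def
    using adj_mat[OF A] d A by (simp add: mult_smult_distrib smult_smult_mat one_smult_mat)
  have BA: "B * A = 1\<^sub>m m" unfolding B_def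
    using adj_mat[OF A] d A by (simp add: mult_smult_assoc_mat smult_smult_mat one_smult_mat)
  have U: "A \<in> Units (ring_mat TYPE(real) m ())"
    using A Bc AB BA unfolding Units_def ring_mat_def by auto
  obtain B' where B': "mat_inverse A = Some B'"
    using mat_inverse(1)[OF A, of "()"] U by (cases "mat_inverse A") auto
  have B'p: "A * B' = 1\<^sub>m m" "B' * A = 1\<^sub>m m" "B' \<in> carrier_mat m m" using mat_inverse(2)[OF A B'] by auto
  have "B = (B' * A) * B" using B'p Bc by simp
  also have "\<dots> = B' * (A * B)" by (rule assoc_mult_mat[OF B'p(3) A Bc])
  also have "\<dots> = B'" using AB B'p by simp
  finally have mB: "minv A = B" unfolding minv_def B' by simp
  show "minv A = (1 / Determinant.det A) \<cdot>\<^sub>m adj_mat A" using mB B_def by simp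
  show "A * minv A = 1\<^sub>m m" "minv A * A = 1\<^sub>m m" "minv A \<in> carrier_mat m m" using mB AB BA Bc by auto
qed

lemma wgram_carrier[simp]: "wgram n J w z \<in> carrier_mat n n"
  unfolding wgram_def by simp

lemma wgram_dims[simp]: "dim_row (wgram n J w z) = n" "dim_col (wgram n J w z) = n"
  unfolding wgram_def by simp_all

lemma wgram_index: "i < n \<Longrightarrow> k < n \<Longrightarrow> wgram n J w z $$ (i,k) = (\<Sum>j\<in>J. w j * z j i * z j k)"
  unfolding wgram_def by simp

lemma wgram_transpose: "transpose_mat (wgram n J w z) = wgram n J w z"
  by (rule eq_matI) (auto simp: wgram_index ac_simps)

lemma wgram_cong: "(\<And>j. j \<in> J \<Longrightarrow> z j = z' j) \<Longrightarrow> wgram n J w z = wgram n J w z'"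
  unfolding wgram_def by (intro eq_matI) auto

lemma vec_dot: "u \<in> carrier_vec n \<Longrightarrow> vec n f \<bullet> u = (\<Sum>i<n. f i * u $ i)"
  unfolding scalar_prod_def by (simp add: atLeast0LessThan)

lemma wgram_quad:
  assumes u: "u \<in> carrier_vec n" and J: "finite J"
  shows "u \<bullet> (wgram n J w z *\<^sub>v u) = (\<Sum>j\<in>J. w j * (vec n (z j) \<bullet> u)\<^sup>2)"
proof -
  have r: "(wgram n J w z *\<^sub>v u) $ i = (\<Sum>k<n. (\<Sum>j\<in>J. w j * z j i * z j k) * u $ k)" if "i < n" for i
  proof -
    have "(wgram n J w z *\<^sub>v u) $ i = (\<Sum>k\<in>{0..<n}. Matrix.row (wgram n J w z) i $ k * u $ k)"
      using u that by (simp add: scalar_prod_def)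
    also have "\<dots> = (\<Sum>k<n. (\<Sum>j\<in>J. w j * z j i * z j k) * u $ k)"
      using that by (auto simp: wgram_index atLeast0LessThan intro!: sum.cong)
    finally show ?thesis .
  qed
  have "u \<bullet> (wgram n J w z *\<^sub>v u) = (\<Sum>i<n. u $ i * (\<Sum>k<n. (\<Sum>j\<in>J. w j * z j i * z j k) * u $ k))"
  proof -
    have "u \<bullet> (wgram n J w z *\<^sub>v u) = (\<Sum>i\<in>{0..<n}. u $ i * (wgram n J w z *\<^sub>v u) $ i)"
      unfolding scalar_prod_def by simp
    also have "\<dots> = (\<Sum>i<n. u $ i * (\<Sum>k<n. (\<Sum>j\<in>J. w j * z j i * z j k) * u $ k))"
      unfolding atLeast0LessThan by (intro sum.cong refl) (simp only: r lessThan_iff)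
    finally show ?thesis .
  qed
  also have "\<dots> = (\<Sum>j\<in>J. w j * ((\<Sum>i<n. z j i * u $ i) * (\<Sum>k<n. z j k * u $ k)))"
    by (simp add: sum_distrib_left sum_distrib_right sum.swap[of _ J] ac_simps)
  also have "\<dots> = (\<Sum>j\<in>J. w j * (vec n (z j) \<bullet> u)\<^sup>2)"
    using u by (simp add: vec_dot power2_eq_square)
  finally show ?thesis .
qed

lemma measurable_det:
  fixes F :: "'a \<Rightarrow> real mat"
  assumes c: "\<And>\<omega>. \<omega> \<in> space M \<Longrightarrow> F \<omega> \<in> carrier_mat m m"
  and e: "\<And>i k. i < m \<Longrightarrow> k < m \<Longrightarrow> (\<lambda>\<omega>. F \<omega> $$ (i,k)) \<in> borel_measurable M"
  shows "(\<lambda>\<omega>. Determinant.det (F \<omega>)) \<in> borel_measurable M"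
proof -
  have "(\<lambda>\<omega>. \<Sum>p\<in>{p. p permutes {0..<m}}. signof p * (\<Prod>i=0..<m. F \<omega> $$ (i, p i))) \<in> borel_measurable M"
  proof (intro borel_measurable_sum borel_measurable_times borel_measurable_const borel_measurable_prod)
    fix p i assume p: "p \<in> {p. p permutes {0..<m}}" and i: "i \<in> {0..<m}"
    have "p i \<in> {0..<m}" using p i by (simp add: permutes_in_image)
    thus "(\<lambda>\<omega>. F \<omega> $$ (i, p i)) \<in> borel_measurable M" using i by (intro e) auto
  qed
  thus ?thesis by (rule measurable_cong[THEN iffD1, rotated]) (simp add: det_def'[OF c])
qed

lemma measurable_minv_entry:
  fixes F :: "'a \<Rightarrow> real mat"
  assumes c: "\<And>\<omega>. \<omega> \<in> space M \<Longrightarrow> F \<omega> \<in> carrier_mat m m"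
  and e: "\<And>i k. i < m \<Longrightarrow> k < m \<Longrightarrow> (\<lambda>\<omega>. F \<omega> $$ (i,k)) \<in> borel_measurable M"
  and d: "\<And>\<omega>. \<omega> \<in> space M \<Longrightarrow> Determinant.det (F \<omega>) \<noteq> 0"
  and ik: "i < m" "k < m"
  shows "(\<lambda>\<omega>. minv (F \<omega>) $$ (i,k)) \<in> borel_measurable M"
proof -
  have eq: "minv (F \<omega>) $$ (i,k) = (1 / Determinant.det (F \<omega>)) * ((-1)^(k+i) * Determinant.det (mat_delete (F \<omega>) k i))"
    if "\<omega> \<in> space M" for \<omega>
    using minv_eq(1)[OF c[OF that] d[OF that]] c[OF that] ik
    by (simp add: adj_mat_def cofactor_def)
  have md: "(\<lambda>\<omega>. Determinant.det (mat_delete (F \<omega>) k i)) \<in> borel_measurable M"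
  proof (rule measurable_det[where m = "m - 1"])
    fix \<omega> assume "\<omega> \<in> space M"
    thus "mat_delete (F \<omega>) k i \<in> carrier_mat (m-1) (m-1)" using c mat_delete_carrier by blast
  next
    fix a b assume ab: "a < m - 1" "b < m - 1"
    have m: "(\<lambda>\<omega>. F \<omega> $$ (if a < k then a else Suc a, if b < i then b else Suc b)) \<in> borel_measurable M"
      using ab by (intro e) auto
    have "mat_delete (F \<omega>) k i $$ (a,b) = F \<omega> $$ (if a < k then a else Suc a, if b < i then b else Suc b)"
      if "\<omega> \<in> space M" for \<omega>
      using c[OF that] ab by (simp add: mat_delete_def)
    thus "(\<lambda>\<omega>. mat_delete (F \<omega>) k i $$ (a,b)) \<in> borel_measurable M"
      using m by (subst measurable_cong) auto
  qed
  have "(\<lambda>\<omega>. (1 / Determinant.det (F \<omega>)) * ((-1)^(k+i) * Determinant.det (mat_delete (F \<omega>) k i))) \<in> borel_measurable M"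
    using measurable_det[OF c e] md by measurable
  thus ?thesis by (rule measurable_cong[THEN iffD1, rotated]) (simp add: eq)
qed

definition good :: "nat \<Rightarrow> nat set \<Rightarrow> (nat \<Rightarrow> nat \<Rightarrow> real) \<Rightarrow> bool" where
  "good n J zs \<longleftrightarrow> (\<forall>x\<in>carrier_vec n. x \<noteq> 0\<^sub>v n \<longrightarrow> (\<exists>j\<in>J. vec n (zs j) \<bullet> x \<noteq> 0))"

lemma quad_pos:
  fixes w :: "nat \<Rightarrow> real"
  assumes K: "finite K" "jj \<in> K" and w: "\<And>j. j \<in> K \<Longrightarrow> w j > 0" and nz: "vec n (z jj) \<bullet> x \<noteq> 0"
  shows "(\<Sum>j\<in>K. w j * (vec n (z j) \<bullet> x)\<^sup>2) > 0"
proof -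
  have "0 < w jj * (vec n (z jj) \<bullet> x)\<^sup>2" using w[OF K(2)] nz by simp
  also have "\<dots> \<le> (\<Sum>j\<in>K. w j * (vec n (z j) \<bullet> x)\<^sup>2)"
  proof (rule member_le_sum)
    fix j assume "j \<in> K - {jj}"
    hence "0 \<le> w j" using w by (simp add: less_imp_le)
    thus "0 \<le> w j * (vec n (z j) \<bullet> x)\<^sup>2" by simp
  qed (use K in auto)
  finally show ?thesis .
qed

lemma det_nonzero_of_pd:
  fixes W :: "real mat"
  assumes W: "W \<in> carrier_mat n n" and pd: "\<And>x. x \<in> carrier_vec n \<Longrightarrow> x \<noteq> 0\<^sub>v n \<Longrightarrow> x \<bullet> (W *\<^sub>v x) > 0"
  shows "Determinant.det W \<noteq> 0"
proof
  assume "Determinant.det W = 0"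
  then obtain v where v: "v \<in> carrier_vec n" "v \<noteq> 0\<^sub>v n" "W *\<^sub>v v = 0\<^sub>v n"
    using det_0_iff_vec_prod_zero[OF W] by blast
  have "v \<bullet> (W *\<^sub>v v) = 0" using v by simp
  thus False using pd[OF v(1,2)] by simp
qed

context
  fixes n d t :: nat and lam :: "nat \<Rightarrow> real" and zs :: "nat \<Rightarrow> nat \<Rightarrow> real"
  assumes td: "t < d" and lam: "\<And>j. j < d \<Longrightarrow> lam j > 0"
  and gd: "good n ({..<d} - {t}) zs"
begin

abbreviation "JJ \<equiv> {..<d} - {t}"
abbreviation "WW \<equiv> wgram n JJ lam zs"
abbreviation "MM \<equiv> minv WW"
definition wv :: "nat \<Rightarrow> nat \<Rightarrow> real" where "wv j i = lam j * (MM *\<^sub>v vec n (zs j)) $ i"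

lemma JJ_fin: "finite JJ" by simp

lemma det_WW: "Determinant.det WW \<noteq> 0"
proof (rule det_nonzero_of_pd[OF wgram_carrier])
  fix x :: "real vec" assume x: "x \<in> carrier_vec n" "x \<noteq> 0\<^sub>v n"
  then obtain j0 where j0: "j0 \<in> JJ" "vec n (zs j0) \<bullet> x \<noteq> 0" using gd unfolding good_def by blast
  show "x \<bullet> (WW *\<^sub>v x) > 0" unfolding wgram_quad[OF x(1) JJ_fin]
    by (rule quad_pos[where jj = j0]) (use lam j0 in auto)
qed

lemma MM: "MM \<in> carrier_mat n n" "WW * MM = 1\<^sub>m n" "MM * WW = 1\<^sub>m n"
  using minv_eq[OF wgram_carrier det_WW] by auto

lemma MM_sym: "transpose_mat MM = MM"
proof -
  have tc: "transpose_mat MM \<in> carrier_mat n n" using MM by simp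
  have "transpose_mat MM * WW = transpose_mat MM * transpose_mat WW" by (simp add: wgram_transpose)
  also have "\<dots> = transpose_mat (WW * MM)" by (rule transpose_mult[OF wgram_carrier MM(1), symmetric])
  also have "\<dots> = 1\<^sub>m n" using MM by simp
  finally have L: "transpose_mat MM * WW = 1\<^sub>m n" .
  have "transpose_mat MM = transpose_mat MM * (WW * MM)" using MM tc by simp
  also have "\<dots> = (transpose_mat MM * WW) * MM" using MM tc by (simp add: assoc_mult_mat[of _ n n _ n _ n])
  also have "\<dots> = MM" using L MM by simp
  finally show ?thesis .
qed

lemma MM_dot: "x \<in> carrier_vec n \<Longrightarrow> y \<in> carrier_vec n \<Longrightarrow> x \<bullet> (MM *\<^sub>v y) = (MM *\<^sub>v x) \<bullet> y"
  using transpose_vec_mult_scalar[OF MM(1), of y x] MM_sym by simp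

lemma full_z_J: "j \<in> JJ \<Longrightarrow> full_z t zs zt j = zs j"
  by (simp add: full_z_def)

lemma det_A: "Determinant.det (Amat n d lam (full_z t zs zt)) \<noteq> 0"
  unfolding Amat_def
proof (rule det_nonzero_of_pd[OF wgram_carrier])
  fix x :: "real vec" assume x: "x \<in> carrier_vec n" "x \<noteq> 0\<^sub>v n"
  then obtain j0 where j0: "j0 \<in> JJ" "vec n (zs j0) \<bullet> x \<noteq> 0" using gd unfolding good_def by blast
  show "x \<bullet> (wgram n {..<d} lam (full_z t zs zt) *\<^sub>v x) > 0" unfolding wgram_quad[OF x(1) finite_lessThan]
    by (rule quad_pos[where jj = j0]) (use lam j0 full_z_J in auto)
qed

lemma A_carrier: "Amat n d lam (full_z t zs zt) \<in> carrier_mat n n"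
  unfolding Amat_def by simp

lemma Ctilde_eq: "Ctilde n d t lam (full_z t zs zt) = MM * wgram n JJ (\<lambda>j. (lam j)\<^sup>2) zs * MM"
proof -
  have "wgram n JJ lam (full_z t zs zt) = WW" by (rule wgram_cong) (simp add: full_z_J)
  moreover have "wgram n JJ (\<lambda>j. (lam j)\<^sup>2) (full_z t zs zt) = wgram n JJ (\<lambda>j. (lam j)\<^sup>2) zs"
    by (rule wgram_cong) (simp add: full_z_J)
  ultimately show ?thesis unfolding Ctilde_def Amat_minus_def by simp
qed

lemma C_carrier: "Ctilde n d t lam (full_z t zs zt) \<in> carrier_mat n n"
  unfolding Ctilde_eq using MM(1) by (intro mult_carrier_mat[OF mult_carrier_mat[OF _ wgram_carrier]])

lemma C_quad:
  assumes x: "x \<in> carrier_vec n"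
  shows "x \<bullet> (Ctilde n d t lam (full_z t zs zt) *\<^sub>v x) = (\<Sum>j\<in>JJ. (\<Sum>i<n. wv j i * x $ i)\<^sup>2)"
proof -
  let ?B = "wgram n JJ (\<lambda>j. (lam j)\<^sup>2) zs"
  have u: "MM *\<^sub>v x \<in> carrier_vec n" using MM x by simp
  have "(MM * ?B * MM) *\<^sub>v x = MM *\<^sub>v (?B *\<^sub>v (MM *\<^sub>v x))"
    using MM x by (simp add: assoc_mult_mat_vec[of _ n n _ n])
  hence "x \<bullet> (Ctilde n d t lam (full_z t zs zt) *\<^sub>v x) = x \<bullet> (MM *\<^sub>v (?B *\<^sub>v (MM *\<^sub>v x)))"
    unfolding Ctilde_eq by simp
  also have "\<dots> = (MM *\<^sub>v x) \<bullet> (?B *\<^sub>v (MM *\<^sub>v x))"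
    by (rule MM_dot[OF x]) (rule mult_mat_vec_carrier[OF wgram_carrier u])
  also have "\<dots> = (\<Sum>j\<in>JJ. (lam j)\<^sup>2 * (vec n (zs j) \<bullet> (MM *\<^sub>v x))\<^sup>2)" by (rule wgram_quad[OF u JJ_fin])
  also have "\<dots> = (\<Sum>j\<in>JJ. (\<Sum>i<n. wv j i * x $ i)\<^sup>2)"
  proof (intro sum.cong refl)
    fix j
    have zc: "vec n (zs j) \<in> carrier_vec n" by simp
    have "vec n (zs j) \<bullet> (MM *\<^sub>v x) = (MM *\<^sub>v vec n (zs j)) \<bullet> x" by (rule MM_dot[OF zc x])
    also have "\<dots> = (\<Sum>i<n. (MM *\<^sub>v vec n (zs j)) $ i * x $ i)"
      using x by (simp add: scalar_prod_def atLeast0LessThan)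
    finally have "lam j * (vec n (zs j) \<bullet> (MM *\<^sub>v x)) = (\<Sum>i<n. wv j i * x $ i)"
      by (simp add: wv_def sum_distrib_left ac_simps)
    thus "(lam j)\<^sup>2 * (vec n (zs j) \<bullet> (MM *\<^sub>v x))\<^sup>2 = (\<Sum>i<n. wv j i * x $ i)\<^sup>2"
      by (metis power_mult_distrib)
  qed
  finally show ?thesis .
qed

lemma C_trace: "mtrace (Ctilde n d t lam (full_z t zs zt)) = (\<Sum>j\<in>JJ. \<Sum>i<n. (wv j i)\<^sup>2)"
proof -
  let ?C = "Ctilde n d t lam (full_z t zs zt)"
  have Cc: "?C \<in> carrier_mat n n" by (rule C_carrier)
  have diag: "?C $$ (i,i) = (\<Sum>j\<in>JJ. (wv j i)\<^sup>2)" if i: "i < n" for i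
  proof -
    have ec: "unit_vec n i \<in> carrier_vec n" by simp
    have "unit_vec n i \<bullet> (?C *\<^sub>v unit_vec n i) = (?C *\<^sub>v unit_vec n i) $ i"
      by (rule scalar_prod_left_unit[OF mult_mat_vec_carrier[OF Cc ec] i])
    also have "\<dots> = Matrix.row ?C i \<bullet> unit_vec n i" using Cc i by simp
    also have "\<dots> = ?C $$ (i,i)" using Cc i by simp
    finally have "?C $$ (i,i) = unit_vec n i \<bullet> (?C *\<^sub>v unit_vec n i)" by simp
    also have "\<dots> = (\<Sum>j\<in>JJ. (\<Sum>k<n. wv j k * unit_vec n i $ k)\<^sup>2)" by (rule C_quad[OF ec])
    also have "\<dots> = (\<Sum>j\<in>JJ. (wv j i)\<^sup>2)"
    proof (intro sum.cong refl)
      fix j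
      have "(\<Sum>k<n. wv j k * unit_vec n i $ k) = (\<Sum>k<n. if k = i then wv j k else 0)"
        by (intro sum.cong) (auto simp: unit_vec_def)
      also have "\<dots> = wv j i" using i by simp
      finally show "(\<Sum>k<n. wv j k * unit_vec n i $ k)\<^sup>2 = (wv j i)\<^sup>2" by simp
    qed
    finally show ?thesis .
  qed
  have "mtrace ?C = (\<Sum>i<n. ?C $$ (i,i))" unfolding mtrace_def using Cc by simp
  also have "\<dots> = (\<Sum>i<n. \<Sum>j\<in>JJ. (wv j i)\<^sup>2)" by (intro sum.cong refl) (simp add: diag)
  also have "\<dots> = (\<Sum>j\<in>JJ. \<Sum>i<n. (wv j i)\<^sup>2)" by (rule sum.swap)
  finally show ?thesis .
qed

end

lemma comp_meas_gauss: "i < n \<Longrightarrow> (\<lambda>x. x i) \<in> borel_measurable (gauss_vec n)"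
proof -
  assume i: "i < n"
  have "(\<lambda>x. x i) \<in> measurable (gauss_vec n) std_normal_measure"
    unfolding gauss_vec_def by (rule measurable_component_singleton) (use i in simp)
  thus ?thesis by (simp add: measurable_cong_sets[OF refl sets_std_normal])
qed

definition en :: "nat \<Rightarrow> nat \<Rightarrow> nat" where "en t k = (if k < t then k else Suc k)"
definition Zmat :: "nat \<Rightarrow> nat \<Rightarrow> (nat \<Rightarrow> nat \<Rightarrow> real) \<Rightarrow> real mat" where
  "Zmat n t zs = mat n n (\<lambda>(k,i). zs (en t k) i)"

lemma en_in: "n < d \<Longrightarrow> k < n \<Longrightarrow> en t k \<in> {..<d} - {t}"
  by (auto simp: en_def)

lemma en_ne: "en t k \<noteq> t" by (auto simp: en_def)
lemma en_lt: "n < d \<Longrightarrow> k < n \<Longrightarrow> en t k < d" by (auto simp: en_def)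

lemma en_inj: "en t k = en t k' \<longleftrightarrow> k = k'"
  by (auto simp: en_def)

lemma good_of_det:
  assumes nd: "n < d" and dz: "Determinant.det (Zmat n t zs) \<noteq> 0"
  shows "good n ({..<d} - {t}) zs"
  unfolding good_def
proof (intro ballI impI, rule ccontr)
  fix x :: "real vec" assume x: "x \<in> carrier_vec n" "x \<noteq> 0\<^sub>v n" and "\<not> (\<exists>j\<in>{..<d} - {t}. vec n (zs j) \<bullet> x \<noteq> 0)"
  hence all: "\<And>j. j \<in> {..<d} - {t} \<Longrightarrow> vec n (zs j) \<bullet> x = 0" by blast
  have Zc: "Zmat n t zs \<in> carrier_mat n n" unfolding Zmat_def by simp
  have "Zmat n t zs *\<^sub>v x = 0\<^sub>v n"
  proof (rule eq_vecI)
    fix k assume "k < dim_vec (0\<^sub>v n :: real vec)"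
    hence k: "k < n" by simp
    have "Matrix.row (Zmat n t zs) k = vec n (zs (en t k))"
      using k by (intro eq_vecI) (auto simp: Zmat_def)
    hence "(Zmat n t zs *\<^sub>v x) $ k = vec n (zs (en t k)) \<bullet> x" using Zc k by simp
    also have "\<dots> = 0" by (rule all[OF en_in[OF nd k]])
    finally show "(Zmat n t zs *\<^sub>v x) $ k = 0\<^sub>v n $ k" using k by simp
  qed (use Zc in simp)
  hence "Determinant.det (Zmat n t zs) = 0"
    using det_0_iff_vec_prod_zero[OF Zc] x by blast
  thus False using dz by simp
qed

lemma AE_det_Zmat:
  assumes nd: "n < d"
  shows "AE zs in others_measure n d t. Determinant.det (Zmat n t zs) \<noteq> 0"
  unfolding others_measure_def
proof (rule AE_multilinear)
  let ?J = "{..<d} - {t}"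
  let ?M = "PiM ?J (\<lambda>_. gauss_vec n)"
  show "finite ?J" by simp
  have ent: "(\<lambda>zs. zs (en t k) i) \<in> borel_measurable ?M" if "k < n" "i < n" for k i
  proof -
    show "(\<lambda>zs. zs (en t k) i) \<in> borel_measurable ?M"
      by (rule measurable_compose[OF measurable_component_singleton[of "en t k" ?J "\<lambda>_. gauss_vec n"] comp_meas_gauss[of i n]])
        (use that en_in[OF nd] in auto)
  qed
  show "(\<lambda>zs. Determinant.det (Zmat n t zs)) \<in> borel_measurable ?M"
    by (rule measurable_det[where m = n]) (auto simp: Zmat_def intro: ent)
  show "\<forall>v\<in>?J. \<forall>x\<in>space ?M. \<exists>a b. \<forall>y\<in>space (gauss_vec n).
          Determinant.det (Zmat n t (x(v:=y))) = (\<Sum>i<n. a i * y i) + b"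
  proof (intro ballI)
    fix v x assume v: "v \<in> ?J" and x: "x \<in> space ?M"
    show "\<exists>a b. \<forall>y\<in>space (gauss_vec n). Determinant.det (Zmat n t (x(v:=y))) = (\<Sum>i<n. a i * y i) + b"
    proof (cases "\<exists>k<n. v = en t k")
      case True
      then obtain k where k: "k < n" "v = en t k" by blast
      have "Determinant.det (Zmat n t (x(v:=y))) = (\<Sum>i<n. cofactor (Zmat n t x) k i * y i) + 0" for y
      proof -
        have Zc: "Zmat n t (x(v:=y)) \<in> carrier_mat n n" by (simp add: Zmat_def)
        have md: "mat_delete (Zmat n t (x(v:=y))) k i = mat_delete (Zmat n t x) k i" for i
        proof (rule eq_matI)
          fix a b assume ab: "a < dim_row (mat_delete (Zmat n t x) k i)" "b < dim_col (mat_delete (Zmat n t x) k i)"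
          hence ab': "a < n - 1" "b < n - 1" by (auto simp: Zmat_def)
          have "en t (if a < k then a else Suc a) \<noteq> v" using k by (auto simp: en_inj)
          thus "mat_delete (Zmat n t (x(v:=y))) k i $$ (a,b) = mat_delete (Zmat n t x) k i $$ (a,b)"
            using ab' by (auto simp: mat_delete_def Zmat_def en_inj)
        qed (auto simp: Zmat_def)
        have "Determinant.det (Zmat n t (x(v:=y))) = (\<Sum>i<n. Zmat n t (x(v:=y)) $$ (k,i) * cofactor (Zmat n t (x(v:=y))) k i)"
          by (rule laplace_expansion_row[OF Zc k(1)])
        also have "\<dots> = (\<Sum>i<n. cofactor (Zmat n t x) k i * y i)"
        proof (intro sum.cong refl)
          fix i assume i: "i \<in> {..<n}"
          have "cofactor (Zmat n t (x(v:=y))) k i = cofactor (Zmat n t x) k i" by (simp only: cofactor_def md)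
          moreover have "Zmat n t (x(v:=y)) $$ (k,i) = y i" using k i by (simp add: Zmat_def)
          ultimately show "Zmat n t (x(v:=y)) $$ (k,i) * cofactor (Zmat n t (x(v:=y))) k i = cofactor (Zmat n t x) k i * y i"
            by simp
        qed
        finally show ?thesis by simp
      qed
      thus ?thesis by blast
    next
      case False
      have "Zmat n t (x(v:=y)) = Zmat n t x" for y
        using False by (intro eq_matI) (auto simp: Zmat_def)
      hence "Determinant.det (Zmat n t (x(v:=y))) = (\<Sum>i<n. (\<lambda>_. 0) i * y i) + Determinant.det (Zmat n t x)" for y
        by simp
      thus ?thesis by (intro exI[of _ "\<lambda>_. 0"] exI[of _ "Determinant.det (Zmat n t x)"]) simp
    qed
  qed
  define x0 where "x0 = (\<lambda>j\<in>?J. \<lambda>i\<in>{..<n}. if j = en t i then 1 else (0::real))"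
  have x0s: "x0 \<in> space ?M" unfolding x0_def by (auto simp: space_PiM space_gauss_vec)
  have "Zmat n t x0 = 1\<^sub>m n"
    by (intro eq_matI) (auto simp: Zmat_def x0_def en_lt[OF nd] en_ne en_inj)
  hence "Determinant.det (Zmat n t x0) \<noteq> 0" by simp
  thus "\<exists>x\<in>space ?M. Determinant.det (Zmat n t x) \<noteq> 0" using x0s by blast
qed

lemma AE_good:
  assumes nd: "n < d"
  shows "AE zs in others_measure n d t. good n ({..<d} - {t}) zs"
  using AE_det_Zmat[OF nd] by (rule AE_mp[OF _ AE_I2]) (use good_of_det[OF nd] in auto)

lemma prob_flip: "prob_space (flip_measure n \<nu>)"
  unfolding flip_measure_def by (rule prob_space_PiM) (rule prob_space_measure_pmf)

lemma prob_P: "prob_space (zt_y_measure n \<nu>)"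
  unfolding zt_y_measure_def by (rule prob_space_pair[OF prob_gauss_vec prob_flip])

lemma mfst: "a < n \<Longrightarrow> (\<lambda>\<omega>. fst \<omega> a) \<in> borel_measurable (zt_y_measure n \<nu>)"
  unfolding zt_y_measure_def by (rule measurable_compose[OF measurable_fst comp_meas_gauss])

lemma msnd_sign: "b < n \<Longrightarrow> (\<lambda>\<omega>. if snd \<omega> b then -1 else (1::real)) \<in> borel_measurable (zt_y_measure n \<nu>)"
proof -
  assume b: "b < n"
  have "(\<lambda>\<omega>. snd \<omega> b) \<in> measurable (zt_y_measure n \<nu>) (measure_pmf (bernoulli_pmf \<nu>))"
    unfolding zt_y_measure_def flip_measure_def
    by (rule measurable_compose[OF measurable_snd measurable_component_singleton]) (use b in simp)
  moreover have "(\<lambda>x. if x then -1 else (1::real)) \<in> borel_measurable (measure_pmf (bernoulli_pmf \<nu>))"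
    by (simp add: measurable_pmf_measure1)
  ultimately show ?thesis by (rule measurable_compose)
qed

lemma mlabels: "b < n \<Longrightarrow> (\<lambda>\<omega>. labels (fst \<omega>) (snd \<omega>) b) \<in> borel_measurable (zt_y_measure n \<nu>)"
  unfolding labels_eq using msnd_sign[of b n \<nu>] mfst[of b n \<nu>] by measurable

lemma mlabels_gauss: "b < n \<Longrightarrow> (\<lambda>x. labels x fl b) \<in> borel_measurable (gauss_vec n)"
  unfolding labels_eq using comp_meas_gauss[of b n] by measurable

lemma vec_dot_mult: "Mi \<in> carrier_mat n n \<Longrightarrow>
  vec n f \<bullet> (Mi *\<^sub>v vec n g) = (\<Sum>a<n. f a * (\<Sum>b<n. Mi $$ (a,b) * g b))"
  by (simp add: scalar_prod_def atLeast0LessThan Matrix.row_def)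

lemma sq_diff_le: "(a - s * b)\<^sup>2 \<le> 2 * a\<^sup>2 + 2 * s\<^sup>2 * (b::real)\<^sup>2"
proof -
  have "0 \<le> (a + s * b)\<^sup>2" by simp
  thus ?thesis by (simp add: power2_eq_square algebra_simps)
qed

lemma key:
  fixes n d t :: nat and lam :: "nat \<Rightarrow> real" and zs :: "nat \<Rightarrow> nat \<Rightarrow> real" and \<nu> :: real
  assumes n2: "2 \<le> n" and nd: "n < d" and td: "t < d" and lam: "\<And>j. j < d \<Longrightarrow> lam j > 0"
  and gd: "good n ({..<d} - {t}) zs"
  shows "measure (zt_y_measure n \<nu>)
             {(zt, fl) \<in> space (zt_y_measure n \<nu>).
                let z = full_z t zs zt; y = labels zt fl;
                    yt = ytilde n d t lam z y; C = Ctilde n d t lam z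
                in yt \<bullet> (C *\<^sub>v yt)
                   \<le> 2 * (1 + 1 / (1/7)) * (1 + (SU_b n d t lam z y)\<^sup>2) * mtrace C * ln (real n)}
           \<ge> 1 - 2 / real n"
proof -
  let ?P = "zt_y_measure n \<nu>"
  let ?M1 = "gauss_vec n"
  let ?M2 = "flip_measure n \<nu>"
  let ?J = "{..<d} - {t}"
  interpret P: prob_space ?P by (rule prob_P)
  interpret M1: prob_space ?M1 by (rule prob_gauss_vec)
  interpret M2: prob_space ?M2 by (rule prob_flip)
  interpret PS: pair_sigma_finite ?M1 ?M2
    by (rule pair_sigma_finite.intro) (simp_all add: M1.sigma_finite_measure M2.sigma_finite_measure)
  define w where "w = wv n d t lam zs"
  define T where "T = (\<Sum>j\<in>?J. \<Sum>i<n. (w j i)\<^sup>2)"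
  define L where "L = 8 * T * ln (real n)"
  define SUf where "SUf \<omega> = SU_b n d t lam (full_z t zs (fst \<omega>)) (labels (fst \<omega>) (snd \<omega>))" for \<omega>
  define G where "G \<omega> \<longleftrightarrow> (\<Sum>j\<in>?J. (\<Sum>i<n. w j i * (labels (fst \<omega>) (snd \<omega>) i - SUf \<omega> * fst \<omega> i))\<^sup>2)
      \<le> 2 * (1 + 1 / (1/7)) * (1 + (SUf \<omega>)\<^sup>2) * T * ln (real n)" for \<omega>
  define Qy where "Qy \<omega> = (\<Sum>j\<in>?J. (\<Sum>i<n. w j i * labels (fst \<omega>) (snd \<omega>) i)\<^sup>2)" for \<omega>
  define Qz where "Qz \<omega> = (\<Sum>j\<in>?J. (\<Sum>i<n. w j i * fst \<omega> i)\<^sup>2)" for \<omega> :: "(nat \<Rightarrow> real) \<times> (nat \<Rightarrow> bool)"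
  have Eeq: "{(zt, fl) \<in> space ?P.
                let z = full_z t zs zt; y = labels zt fl;
                    yt = ytilde n d t lam z y; C = Ctilde n d t lam z
                in yt \<bullet> (C *\<^sub>v yt)
                   \<le> 2 * (1 + 1 / (1/7)) * (1 + (SU_b n d t lam z y)\<^sup>2) * mtrace C * ln (real n)}
        = {\<omega> \<in> space ?P. G \<omega>}"
  proof -
    have "(let z = full_z t zs zt; y = labels zt fl;
                    yt = ytilde n d t lam z y; C = Ctilde n d t lam z
                in yt \<bullet> (C *\<^sub>v yt)
                   \<le> 2 * (1 + 1 / (1/7)) * (1 + (SU_b n d t lam z y)\<^sup>2) * mtrace C * ln (real n))
          \<longleftrightarrow> G (zt, fl)" for zt fl
    proof -
      let ?y = "labels zt fl"
      let ?s = "SU_b n d t lam (full_z t zs zt) ?y"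
      let ?yt = "ytilde n d t lam (full_z t zs zt) ?y"
      have yt: "?yt = vec n ?y - ?s \<cdot>\<^sub>v vec n zt" unfolding ytilde_def by (simp add: full_z_def)
      have ytc: "?yt \<in> carrier_vec n" unfolding yt by simp
      have yti: "?yt $ i = ?y i - ?s * zt i" if "i < n" for i unfolding yt using that by simp
      have "?yt \<bullet> (Ctilde n d t lam (full_z t zs zt) *\<^sub>v ?yt) = (\<Sum>j\<in>?J. (\<Sum>i<n. w j i * ?yt $ i)\<^sup>2)"
        unfolding w_def by (rule C_quad[OF td lam gd ytc])
      also have "\<dots> = (\<Sum>j\<in>?J. (\<Sum>i<n. w j i * (?y i - ?s * zt i))\<^sup>2)"
        by (intro sum.cong refl arg_cong[where f = "\<lambda>x. x\<^sup>2"]) (simp add: yti)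
      moreover have "mtrace (Ctilde n d t lam (full_z t zs zt)) = T"
        unfolding T_def w_def by (rule C_trace[OF td lam gd])
      ultimately show ?thesis
        unfolding G_def SUf_def Let_def by simp
    qed
    thus ?thesis by auto
  qed
  have mA: "(\<lambda>\<omega>. Amat n d lam (full_z t zs (fst \<omega>)) $$ (a,b)) \<in> borel_measurable ?P" if "a < n" "b < n" for a b
  proof -
    have "(\<lambda>\<omega>::(nat \<Rightarrow> real) \<times> (nat \<Rightarrow> bool). \<Sum>j<d. lam j * (if j = t then fst \<omega> a else zs j a) * (if j = t then fst \<omega> b else zs j b)) \<in> borel_measurable ?P"
      using mfst[OF that(1)] mfst[OF that(2)] by measurable
    moreover have "(\<lambda>\<omega>::(nat \<Rightarrow> real) \<times> (nat \<Rightarrow> bool). Amat n d lam (full_z t zs (fst \<omega>)) $$ (a,b)) = (\<lambda>\<omega>. \<Sum>j<d. lam j * (if j = t then fst \<omega> a else zs j a) * (if j = t then fst \<omega> b else zs j b))"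
      using that by (auto simp: Amat_def wgram_index full_z_def intro!: sum.cong)
    ultimately show ?thesis by (simp only:)
  qed
  have mMi: "(\<lambda>\<omega>. minv (Amat n d lam (full_z t zs (fst \<omega>))) $$ (a,b)) \<in> borel_measurable ?P" if "a < n" "b < n" for a b
    by (rule measurable_minv_entry[where m = n]) (use that mA det_A[OF td lam gd] A_carrier[OF td lam gd] in auto)
  have SUf_eq: "SUf \<omega> = lam t * (\<Sum>a<n. fst \<omega> a * (\<Sum>b<n. minv (Amat n d lam (full_z t zs (fst \<omega>))) $$ (a,b) * labels (fst \<omega>) (snd \<omega>) b))" for \<omega>
  proof -
    have "sqrt (lam t) * sqrt (lam t) = lam t" using lam[OF td] by simp
    moreover have "minv (Amat n d lam (full_z t zs (fst \<omega>))) \<in> carrier_mat n n"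
      using minv_eq(4)[OF A_carrier[OF td lam gd] det_A[OF td lam gd]] .
    ultimately show ?thesis
      unfolding SUf_def SU_b_def alpha_hat_def by (simp add: vec_dot_mult full_z_def mult.assoc[symmetric])
  qed
  have mSU: "SUf \<in> borel_measurable ?P"
  proof -
    have "(\<lambda>\<omega>. lam t * (\<Sum>a<n. fst \<omega> a * (\<Sum>b<n. minv (Amat n d lam (full_z t zs (fst \<omega>))) $$ (a,b) * labels (fst \<omega>) (snd \<omega>) b))) \<in> borel_measurable ?P"
      by (intro borel_measurable_times borel_measurable_const borel_measurable_sum mfst mMi mlabels) auto
    thus ?thesis by (simp add: SUf_eq[abs_def])
  qed
  have mlab_sum: "(\<lambda>\<omega>. \<Sum>i<n. w j i * labels (fst \<omega>) (snd \<omega>) i) \<in> borel_measurable ?P" for j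
    by (intro borel_measurable_times borel_measurable_const borel_measurable_sum mlabels) auto
  have mfst_sum: "(\<lambda>\<omega>::(nat \<Rightarrow> real) \<times> (nat \<Rightarrow> bool). \<Sum>i<n. w j i * fst \<omega> i) \<in> borel_measurable ?P" for j
    by (intro borel_measurable_times borel_measurable_const borel_measurable_sum mfst) auto
  have mG_lhs: "(\<lambda>\<omega>. \<Sum>j\<in>?J. (\<Sum>i<n. w j i * (labels (fst \<omega>) (snd \<omega>) i - SUf \<omega> * fst \<omega> i))\<^sup>2) \<in> borel_measurable ?P"
    by (intro borel_measurable_power borel_measurable_times borel_measurable_const borel_measurable_sum
        borel_measurable_diff mlabels mfst mSU) auto
  have Es: "{\<omega> \<in> space ?P. G \<omega>} \<in> sets ?P"
    unfolding G_def using mG_lhs mSU by measurable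
  have Qym: "Qy \<in> borel_measurable ?P" unfolding Qy_def
    by (intro borel_measurable_sum borel_measurable_power mlab_sum)
  have Qzm: "Qz \<in> borel_measurable ?P" unfolding Qz_def
    by (intro borel_measurable_sum borel_measurable_power mfst_sum)
  let ?Fy = "{\<omega> \<in> space ?P. L < Qy \<omega>}"
  let ?Fz = "{\<omega> \<in> space ?P. L < Qz \<omega>}"
  have Fys: "?Fy \<in> sets ?P" using Qym by measurable
  have Fzs: "?Fz \<in> sets ?P" using Qzm by measurable
  have incl: "space ?P - (?Fy \<union> ?Fz) \<subseteq> {\<omega> \<in> space ?P. G \<omega>}"
  proof (rule subsetI)
    fix \<omega> assume "\<omega> \<in> space ?P - (?Fy \<union> ?Fz)"
    hence \<omega>: "\<omega> \<in> space ?P" and y: "\<not> L < Qy \<omega>" and z: "\<not> L < Qz \<omega>" by auto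
    let ?s = "SUf \<omega>"
    let ?a = "\<lambda>j. \<Sum>i<n. w j i * labels (fst \<omega>) (snd \<omega>) i"
    let ?b = "\<lambda>j. \<Sum>i<n. w j i * fst \<omega> i"
    have "(\<Sum>j\<in>?J. (\<Sum>i<n. w j i * (labels (fst \<omega>) (snd \<omega>) i - ?s * fst \<omega> i))\<^sup>2) = (\<Sum>j\<in>?J. (?a j - ?s * ?b j)\<^sup>2)"
      by (intro sum.cong refl) (simp add: algebra_simps sum_subtractf sum_distrib_left)
    also have "\<dots> \<le> (\<Sum>j\<in>?J. 2 * (?a j)\<^sup>2 + 2 * ?s\<^sup>2 * (?b j)\<^sup>2)"
      by (intro sum_mono sq_diff_le)
    also have "\<dots> = 2 * Qy \<omega> + 2 * ?s\<^sup>2 * Qz \<omega>"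
      unfolding Qy_def Qz_def by (simp add: sum.distrib sum_distrib_left)
    also have "\<dots> \<le> 2 * L + 2 * ?s\<^sup>2 * L"
      using y z by (intro add_mono mult_left_mono) auto
    also have "\<dots> = 2 * (1 + 1 / (1/7)) * (1 + ?s\<^sup>2) * T * ln (real n)"
      unfolding L_def by (simp add: algebra_simps)
    finally have "G \<omega>" unfolding G_def .
    thus "\<omega> \<in> {\<omega> \<in> space ?P. G \<omega>}" using \<omega> by simp
  qed
  have slice: "(\<lambda>zt. (zt, fl)) -` {\<omega> \<in> space ?P. L < Q \<omega>} = (if fl \<in> space ?M2 then {zt \<in> space ?M1. L < Q (zt, fl)} else {})" for fl Q
    by (auto simp: zt_y_measure_def space_pair_measure)
  have tail: "emeasure ?P {\<omega> \<in> space ?P. L < Q \<omega>} \<le> ennreal (1 / real n)"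
    if Qs: "{\<omega> \<in> space ?P. L < Q \<omega>} \<in> sets ?P"
    and fl: "\<And>fl. fl \<in> space ?M2 \<Longrightarrow> emeasure ?M1 {zt \<in> space ?M1. L < Q (zt, fl)} \<le> ennreal (1 / real n)" for Q
  proof -
    have "emeasure ?P {\<omega> \<in> space ?P. L < Q \<omega>} = (\<integral>\<^sup>+fl. emeasure ?M1 ((\<lambda>zt. (zt, fl)) -` {\<omega> \<in> space ?P. L < Q \<omega>}) \<partial>?M2)"
      using Qs unfolding zt_y_measure_def by (rule PS.emeasure_pair_measure_alt2)
    also have "\<dots> \<le> (\<integral>\<^sup>+fl. ennreal (1 / real n) \<partial>?M2)"
    proof (rule nn_integral_mono)
      fix x assume x: "x \<in> space ?M2"
      show "emeasure ?M1 ((\<lambda>zt. (zt, x)) -` {\<omega> \<in> space ?P. L < Q \<omega>}) \<le> ennreal (1 / real n)"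
        by (subst slice) (use x fl in simp)
    qed
    also have "\<dots> = ennreal (1 / real n)" by (simp add: M2.emeasure_space_1)
    finally show ?thesis .
  qed
  have Fy_bound: "emeasure ?P ?Fy \<le> ennreal (1 / real n)"
  proof (rule tail[OF Fys])
    fix fl assume "fl \<in> space ?M2"
    show "emeasure ?M1 {zt \<in> space ?M1. L < Qy (zt, fl)} \<le> ennreal (1 / real n)"
      unfolding Qy_def L_def T_def fst_conv snd_conv
      by (rule quad_tail[where Y = "\<lambda>i x. labels x fl i", OF prob_gauss_vec _ rad_vec_mgf _ refl n2])
        (auto intro: mlabels_gauss)
  qed
  have Fz_bound: "emeasure ?P ?Fz \<le> ennreal (1 / real n)"
  proof (rule tail[OF Fzs])
    fix fl assume "fl \<in> space ?M2"
    show "emeasure ?M1 {zt \<in> space ?M1. L < Qz (zt, fl)} \<le> ennreal (1 / real n)"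
      unfolding Qz_def L_def T_def fst_conv snd_conv
      by (rule quad_tail[where Y = "\<lambda>i x. x i", OF prob_gauss_vec _ _ _ refl n2])
         (auto intro: comp_meas_gauss simp: gauss_vec_mgf)
  qed
  have my: "measure ?P ?Fy \<le> 1 / real n" using Fy_bound by (simp add: P.emeasure_eq_measure)
  have mz: "measure ?P ?Fz \<le> 1 / real n" using Fz_bound by (simp add: P.emeasure_eq_measure)
  have "1 - 2 / real n \<le> 1 - (measure ?P ?Fy + measure ?P ?Fz)" using my mz by simp
  also have "\<dots> \<le> 1 - measure ?P (?Fy \<union> ?Fz)"
    using measure_subadditive[OF Fys Fzs] by (simp add: P.emeasure_eq_measure)
  also have "\<dots> = measure ?P (space ?P - (?Fy \<union> ?Fz))"
    using P.prob_compl[of "?Fy \<union> ?Fz"] Fys Fzs by simp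
  also have "\<dots> \<le> measure ?P {\<omega> \<in> space ?P. G \<omega>}"
    by (rule P.finite_measure_mono[OF incl Es])
  finally show ?thesis unfolding Eeq .
qed

theorem lemma7:
  "\<exists>c::real. c > 0 \<and> (\<exists>c6::real. c6 > 0 \<and>
     (\<forall>(n::nat) (d::nat) (t::nat) (lam::nat \<Rightarrow> real) (\<nu>::real).
        real n \<ge> c6 \<longrightarrow> n < d \<longrightarrow> t < d \<longrightarrow> (\<forall>j<d. lam j > 0) \<longrightarrow>
        0 \<le> \<nu> \<longrightarrow> \<nu> < 1/2 \<longrightarrow>
        (AE zs in others_measure n d t.
           measure (zt_y_measure n \<nu>)
             {(zt, fl) \<in> space (zt_y_measure n \<nu>).
                let z = full_z t zs zt; y = labels zt fl;
                    yt = ytilde n d t lam z y; C = Ctilde n d t lam z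
                in yt \<bullet> (C *\<^sub>v yt)
                   \<le> 2 * (1 + 1 / c) * (1 + (SU_b n d t lam z y)\<^sup>2) * mtrace C * ln (real n)}
           \<ge> 1 - 2 / real n)))"
proof (rule exI[of _ "1/7"], intro conjI)
  show "(1/7::real) > 0" by simp
  show "\<exists>c6::real. c6 > 0 \<and>
     (\<forall>(n::nat) (d::nat) (t::nat) (lam::nat \<Rightarrow> real) (\<nu>::real).
        real n \<ge> c6 \<longrightarrow> n < d \<longrightarrow> t < d \<longrightarrow> (\<forall>j<d. lam j > 0) \<longrightarrow>
        0 \<le> \<nu> \<longrightarrow> \<nu> < 1/2 \<longrightarrow>
        (AE zs in others_measure n d t.
           measure (zt_y_measure n \<nu>)
             {(zt, fl) \<in> space (zt_y_measure n \<nu>).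
                let z = full_z t zs zt; y = labels zt fl;
                    yt = ytilde n d t lam z y; C = Ctilde n d t lam z
                in yt \<bullet> (C *\<^sub>v yt)
                   \<le> 2 * (1 + 1 / (1/7)) * (1 + (SU_b n d t lam z y)\<^sup>2) * mtrace C * ln (real n)}
           \<ge> 1 - 2 / real n))"
  proof (rule exI[of _ 2], intro conjI allI impI)
    show "(2::real) > 0" by simp
    fix n d t :: nat and lam :: "nat \<Rightarrow> real" and \<nu> :: real
    assume n: "2 \<le> real n" and nd: "n < d" and td: "t < d" and lam: "\<forall>j<d. lam j > 0"
    have n2: "2 \<le> n" using n by simp
    show "AE zs in others_measure n d t.
           measure (zt_y_measure n \<nu>)
             {(zt, fl) \<in> space (zt_y_measure n \<nu>).
                let z = full_z t zs zt; y = labels zt fl;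
                    yt = ytilde n d t lam z y; C = Ctilde n d t lam z
                in yt \<bullet> (C *\<^sub>v yt)
                   \<le> 2 * (1 + 1 / (1/7)) * (1 + (SU_b n d t lam z y)\<^sup>2) * mtrace C * ln (real n)}
           \<ge> 1 - 2 / real n"
      using AE_good[OF nd, of t]
    proof (rule AE_mp[OF _ AE_I2], intro impI)
      fix zs assume g: "good n ({..<d} - {t}) zs"
      show "measure (zt_y_measure n \<nu>)
             {(zt, fl) \<in> space (zt_y_measure n \<nu>).
                let z = full_z t zs zt; y = labels zt fl;
                    yt = ytilde n d t lam z y; C = Ctilde n d t lam z
                in yt \<bullet> (C *\<^sub>v yt)
                   \<le> 2 * (1 + 1 / (1/7)) * (1 + (SU_b n d t lam z y)\<^sup>2) * mtrace C * ln (real n)}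
           \<ge> 1 - 2 / real n"
        by (rule key[OF n2 nd td _ g]) (use lam in auto)
    qed
  qed
qed

end
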